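(* With notation as in the context, for $|z|<1$ one has $F^{W}_q(z:p_1,\dots,p_n)=(1-z)^{-W}F^{0}_q(z:p_1,\dots,p_n)$. Consequently, if $L(q:p_1,\dots,p_n)$ and $L(q:s_1,\dots,s_n)$ have the same generating function (equivalently, are isospectral), then for every $W\ge0$ the spaces $L^{(W)}(q:p_1,\dots,p_n)$ and $L^{(W)}(q:s_1,\dots,s_n)$ have the same generating function (equivalently, are isospectral).
   Context: Let $R(\theta)=\begin{pmatrix}\cos 2\pi\theta & \sin 2\pi\theta\\ -\sin 2\pi\theta & \cos 2\pi\theta\end{pmatrix}$. For integers $q\ge2$, $W\ge0$ and $p_1,\dots,p_n$ with $\gcd(p_1,\dots,p_n,q)=1$, $g=\mathrm{diag}(R(p_1/q),\dots,R(p_n/q),I_W)\in O(2n+W)$, $G=\langle g\rangle$, and $L^{(W)}(q:p_1,\dots,p_n)=S^{2n+W-1}/G$ with the metric induced from the round unit sphere; $L(q:\cdot)=L^{(0)}(q:\cdot)$. Let $\mathcal H^k$ be the space of restrictions to the sphere of harmonic homogeneous polynomials of degree $k$ on $\mathbf R^{2n+W}$, $\mathcal H^k_G$ its $G$-invariant subspace, and $F^W_q(z:p_1,\dots,p_n)=\sum_{k\ge0}(\dim\mathcal H^k_G)z^k$ the generating function of the spectrum (the multiplicity of eigenvalue $k(k+2n+W-2)$ is $\dim\mathcal H^k_G$, and there are no other eigenvalues). *)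

theory Defs
  imports "HOL-Analysis.Analysis" "HOL-Library.Function_Algebras"
begin

text \<open>Points of R^N are modelled as functions nat => real vanishing at indices >= N.\<close>

definition sphere_pts :: "nat \<Rightarrow> (nat \<Rightarrow> real) set" where
  "sphere_pts N = {x. (\<forall>i\<ge>N. x i = 0) \<and> (\<Sum>i<N. (x i)^2) = 1}"

text \<open>A polynomial in the variables x_0..x_(N-1) is given by a finitely supported
  coefficient function on multi-indices.\<close>

definition hom_poly_coeffs :: "nat \<Rightarrow> nat \<Rightarrow> ((nat \<Rightarrow> nat) \<Rightarrow> real) \<Rightarrow> bool" where
  "hom_poly_coeffs N k c \<longleftrightarrow> finite {a. c a \<noteq> 0} \<and>
     (\<forall>a. c a \<noteq> 0 \<longrightarrow> (\<forall>i\<ge>N. a i = 0) \<and> (\<Sum>i<N. a i) = k)"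

definition poly_fun :: "nat \<Rightarrow> ((nat \<Rightarrow> nat) \<Rightarrow> real) \<Rightarrow> (nat \<Rightarrow> real) \<Rightarrow> real" where
  "poly_fun N c x = (\<Sum>a\<in>{a. c a \<noteq> 0}. c a * (\<Prod>i<N. x i ^ a i))"

text \<open>Coefficients of the Laplacian of the polynomial with coefficients c:
  the coefficient of x^b in Delta(sum c_a x^a) is sum_i (b_i+2)(b_i+1) c(b + 2 e_i).\<close>

definition laplacian_coeffs :: "nat \<Rightarrow> ((nat \<Rightarrow> nat) \<Rightarrow> real) \<Rightarrow> (nat \<Rightarrow> nat) \<Rightarrow> real" where
  "laplacian_coeffs N c b = (\<Sum>i<N. real ((b i + 2) * (b i + 1)) * c (b(i := b i + 2)))"

definition harmonic_coeffs :: "nat \<Rightarrow> ((nat \<Rightarrow> nat) \<Rightarrow> real) \<Rightarrow> bool" where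
  "harmonic_coeffs N c \<longleftrightarrow> (\<forall>b. laplacian_coeffs N c b = 0)"

text \<open>H^k: restrictions to S^(N-1) of harmonic homogeneous polynomials of degree k
  (functions are set to 0 off the sphere).\<close>

definition harm_space :: "nat \<Rightarrow> nat \<Rightarrow> ((nat \<Rightarrow> real) \<Rightarrow> real) set" where
  "harm_space N k = {(\<lambda>x. if x \<in> sphere_pts N then poly_fun N c x else 0) | c.
       hom_poly_coeffs N k c \<and> harmonic_coeffs N c}"

text \<open>The generator g = diag(R(p_1/q),...,R(p_n/q), I_W) acting on column vectors:
  block j acts on coordinates 2j, 2j+1.\<close>

definition lens_gen :: "nat \<Rightarrow> int list \<Rightarrow> (nat \<Rightarrow> real) \<Rightarrow> (nat \<Rightarrow> real)" where
  "lens_gen q p x = (\<lambda>i. if i < 2 * length p then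
      (let t = 2 * pi * real_of_int (p ! (i div 2)) / real q in
        if even i then cos t * x i + sin t * x (i + 1)
        else - sin t * x (i - 1) + cos t * x i)
      else x i)"

definition lens_group :: "nat \<Rightarrow> int list \<Rightarrow> ((nat \<Rightarrow> real) \<Rightarrow> (nat \<Rightarrow> real)) set" where
  "lens_group q p = {(lens_gen q p) ^^ m | m. True}"

definition invariant_harm_space :: "nat \<Rightarrow> nat \<Rightarrow> int list \<Rightarrow> nat \<Rightarrow> ((nat \<Rightarrow> real) \<Rightarrow> real) set" where
  "invariant_harm_space W q p k =
     {f \<in> harm_space (2 * length p + W) k.
        \<forall>h\<in>lens_group q p. \<forall>x\<in>sphere_pts (2 * length p + W). f (h x) = f x}"

definition fun_dim :: "('a \<Rightarrow> real) set \<Rightarrow> nat" where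
  "fun_dim V = vector_space.dim (\<lambda>(c::real) f x. c * f x) V"

definition gen_fun :: "nat \<Rightarrow> nat \<Rightarrow> int list \<Rightarrow> complex \<Rightarrow> complex" where
  "gen_fun W q p z = (\<Sum>k. of_nat (fun_dim (invariant_harm_space W q p k)) * z ^ k)"

end

theory Submission
  imports Defs "HOL-Computational_Algebra.Polynomial"
begin

definition MI :: "nat \<Rightarrow> nat \<Rightarrow> (nat \<Rightarrow> nat) set" where
  "MI N k = {a. (\<forall>i\<ge>N. a i = 0) \<and> (\<Sum>i<N. a i) = k}"

definition mon :: "nat \<Rightarrow> (nat \<Rightarrow> nat) \<Rightarrow> (nat \<Rightarrow> real) \<Rightarrow> real" where
  "mon N a x = (\<Prod>i<N. x i ^ a i)"

definition pf :: "nat \<Rightarrow> nat \<Rightarrow> ((nat \<Rightarrow> nat) \<Rightarrow> real) \<Rightarrow> (nat \<Rightarrow> real) \<Rightarrow> real" where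
  "pf N k c x = (\<Sum>a\<in>MI N k. c a * mon N a x)"

lemma finite_MI: "finite (MI N k)"
proof -
  have "MI N k \<subseteq> {f. \<forall>x. (x \<in> {..<N} \<longrightarrow> f x \<in> {..k}) \<and> (x \<notin> {..<N} \<longrightarrow> f x = 0)}"
  proof
    fix a assume a: "a \<in> MI N k"
    { fix i assume "i < N"
      then have "a i \<le> (\<Sum>i<N. a i)" by (intro member_le_sum) auto
      then have "a i \<le> k" using a by (simp add: MI_def) }
    then show "a \<in> {f. \<forall>x. (x \<in> {..<N} \<longrightarrow> f x \<in> {..k}) \<and> (x \<notin> {..<N} \<longrightarrow> f x = 0)}"
      using a by (auto simp: MI_def)
  qed
  then show ?thesis by (rule finite_subset) (intro finite_set_of_finite_funs; simp)
qed

lemma hom_iff: "hom_poly_coeffs N k c \<longleftrightarrow> (\<forall>a. c a \<noteq> 0 \<longrightarrow> a \<in> MI N k)"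
proof
  assume "\<forall>a. c a \<noteq> 0 \<longrightarrow> a \<in> MI N k"
  then have "{a. c a \<noteq> 0} \<subseteq> MI N k" by auto
  then show "hom_poly_coeffs N k c" using finite_MI[of N k] \<open>\<forall>a. _\<close>
    by (auto simp: hom_poly_coeffs_def MI_def intro: finite_subset)
qed (auto simp: hom_poly_coeffs_def MI_def)

lemma hom_zero: "hom_poly_coeffs N k c \<Longrightarrow> a \<notin> MI N k \<Longrightarrow> c a = 0"
  by (auto simp: hom_iff)

lemma poly_fun_pf: assumes "hom_poly_coeffs N k c" shows "poly_fun N c = pf N k c"
proof
  fix x
  have "poly_fun N c x = (\<Sum>a\<in>{a. c a \<noteq> 0}. c a * mon N a x)"
    by (simp add: poly_fun_def mon_def)
  also have "\<dots> = pf N k c x" unfolding pf_def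
    using assms finite_MI[of N k] by (intro sum.mono_neutral_left) (auto simp: hom_iff)
  finally show "poly_fun N c x = pf N k c x" .
qed

lemma mon_cong: "(\<And>i. i < N \<Longrightarrow> x i = y i) \<Longrightarrow> mon N a x = mon N a y"
  by (simp add: mon_def)

lemma pf_cong: "(\<And>i. i < N \<Longrightarrow> x i = y i) \<Longrightarrow> pf N k c x = pf N k c y"
  unfolding pf_def by (intro sum.cong refl) (metis mon_cong)

lemma mon_scale: "a \<in> MI N k \<Longrightarrow> mon N a (\<lambda>i. t * x i) = t ^ k * mon N a x"
  by (simp add: mon_def MI_def power_mult_distrib prod.distrib power_sum[symmetric])

lemma pf_scale: "pf N k c (\<lambda>i. t * x i) = t ^ k * pf N k c x"
  unfolding pf_def by (simp add: mon_scale sum_distrib_left algebra_simps cong: sum.cong)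

lemma pf_add: "pf N k (\<lambda>a. c a + d a) x = pf N k c x + pf N k d x"
  by (simp add: pf_def algebra_simps sum.distrib)
lemma pf_smult: "pf N k (\<lambda>a. t * c a) x = t * pf N k c x"
  by (simp add: pf_def algebra_simps sum_distrib_left)
lemma pf_zero[simp]: "pf N k (\<lambda>a. 0) x = 0"
  by (simp add: pf_def)
lemma pf_diff: "pf N k (\<lambda>a. c a - d a) x = pf N k c x - pf N k d x"
  by (simp add: pf_def algebra_simps sum_subtractf)

definition slice :: "nat \<Rightarrow> nat \<Rightarrow> ((nat\<Rightarrow>nat)\<Rightarrow>real) \<Rightarrow> ((nat\<Rightarrow>nat)\<Rightarrow>real)" where
  "slice N m c = (\<lambda>a. if a N = 0 then c (a(N := m)) else 0)"

lemma mon_Suc: "mon (Suc N) a x = mon N a x * x N ^ a N"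
  by (simp add: mon_def)

lemma mon_upd_N: "mon N (a(N := m)) x = mon N a x"
proof -
  have "\<And>i. i \<in> {..<N} \<Longrightarrow> x i ^ (a(N:=m)) i = x i ^ a i" by auto
  then show ?thesis unfolding mon_def by (rule prod.cong[OF refl])
qed

lemma sum_upd_N: "(\<Sum>i<(N::nat). (a(N:=m)) i) = (\<Sum>i<N. (a i::nat))"
  by (rule sum.cong[OF refl]) auto

lemma pf_slice:
  "pf (Suc N) k c x = (\<Sum>m\<le>k. x N ^ m * pf N (k - m) (slice N m c) x)"
proof -
  have "(\<Sum>m\<le>k. x N ^ m * pf N (k - m) (slice N m c) x)
      = (\<Sum>m\<le>k. \<Sum>b\<in>MI N (k - m). x N ^ m * (slice N m c b * mon N b x))"
    by (simp add: pf_def sum_distrib_left)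
  also have "\<dots> = (\<Sum>(m,b)\<in>Sigma {..k} (\<lambda>m. MI N (k - m)). x N ^ m * (slice N m c b * mon N b x))"
    by (rule sum.Sigma) (auto simp: finite_MI)
  also have "\<dots> = (\<Sum>a\<in>MI (Suc N) k. c a * mon (Suc N) a x)"
  proof (rule sum.reindex_bij_witness[where i="\<lambda>a. (a N, a(N:=0))" and j="\<lambda>(m,b). b(N:=m)"])
    fix a assume a: "a \<in> MI (Suc N) k"
    show "(\<lambda>(m, b). b(N := m)) (a N, a(N := 0)) = a" by auto
    have s: "(\<Sum>i<Suc N. a i) = k" using a by (simp add: MI_def)
    have "(\<Sum>i<N. (a(N:=0)) i) = (\<Sum>i<N. a i)" by (rule sum_upd_N)
    then show "(a N, a(N := 0)) \<in> Sigma {..k} (\<lambda>m. MI N (k - m))"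
      using a s by (auto simp: MI_def)
  next
    fix mb assume mb: "mb \<in> Sigma {..k} (\<lambda>m. MI N (k - m))"
    obtain m b where mbd[simp]: "mb = (m,b)" by (cases mb)
    from mb have m: "m \<le> k" and b: "b \<in> MI N (k - m)" by auto
    have bN: "b N = 0" using b by (simp add: MI_def)
    show "((case mb of (m, b) \<Rightarrow> b(N := m)) N, (case mb of (m, b) \<Rightarrow> b(N := m))(N := 0)) = mb"
      using bN by (auto simp: fun_eq_iff)
    have "\<forall>i\<ge>Suc N. (b(N:=m)) i = 0" using b by (auto simp: MI_def)
    moreover have "(\<Sum>i<Suc N. (b(N:=m)) i) = k" using b m by (simp add: MI_def sum_upd_N)
    ultimately show "(case mb of (m, b) \<Rightarrow> b(N := m)) \<in> MI (Suc N) k"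
      by (simp add: MI_def)
    show "c (case mb of (m, b) \<Rightarrow> b(N := m)) * mon (Suc N) (case mb of (m, b) \<Rightarrow> b(N := m)) x =
      (case mb of (m, b) \<Rightarrow> x N ^ m * (slice N m c b * mon N b x))"
      using bN by (simp add: slice_def mon_Suc mon_upd_N)
  qed
  finally show ?thesis by (simp add: pf_def)
qed

lemma slice_hom:
  assumes "hom_poly_coeffs (Suc N) k c"
  shows "hom_poly_coeffs N (k - m) (slice N m c)"
  unfolding hom_iff
proof (intro allI impI)
  fix b assume "slice N m c b \<noteq> 0"
  then have bN: "b N = 0" and "c (b(N:=m)) \<noteq> 0" by (auto simp: slice_def split: if_splits)
  then have "b(N:=m) \<in> MI (Suc N) k" using assms by (auto simp: hom_iff)
  then have h1: "\<forall>i\<ge>Suc N. b i = 0" and h2: "(\<Sum>i<N. b i) + m = k" by (auto simp: MI_def sum_upd_N)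
  have "\<forall>i\<ge>N. b i = 0"
  proof (intro allI impI)
    fix i assume "N \<le> i" then show "b i = 0" using h1 bN by (cases "i = N") auto
  qed
  then show "b \<in> MI N (k - m)" using h2 by (auto simp: MI_def)
qed

lemma slice_big:
  assumes "hom_poly_coeffs (Suc N) k c" "k < m"
  shows "slice N m c = (\<lambda>_. 0)"
proof
  fix b
  show "slice N m c b = 0"
  proof (rule ccontr)
    assume "slice N m c b \<noteq> 0"
    then have "c (b(N:=m)) \<noteq> 0" by (auto simp: slice_def split: if_splits)
    then have "b(N:=m) \<in> MI (Suc N) k" using assms by (auto simp: hom_iff)
    then have "m \<le> k" by (auto simp: MI_def)
    then show False using assms by simp
  qed
qed

lemma c_slice: "c a = slice N (a N) c (a(N:=0))"
  by (simp add: slice_def)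

lemma MI0: "MI 0 k = (if k = 0 then {\<lambda>_. 0} else {})"
  by (auto simp: MI_def)

lemma poly_coeffs_zero:
  fixes S :: "nat \<Rightarrow> real"
  assumes "\<And>t. (\<Sum>m\<le>k. t ^ m * S m) = 0"
  shows "m \<le> k \<Longrightarrow> S m = 0"
  using polyfun_eq_0[of S k] assms by (auto simp: mult.commute)

lemma pf_eq0:
  "hom_poly_coeffs N k c \<Longrightarrow> (\<And>x. pf N k c x = 0) \<Longrightarrow> c = (\<lambda>_. 0)"
proof (induction N arbitrary: k c)
  case 0
  show ?case
  proof
    fix a
    show "c a = 0"
    proof (cases "a \<in> MI 0 k")
      case True
      then have k: "k = 0" and a: "a = (\<lambda>_. 0)" by (auto simp: MI0 split: if_splits)
      have "pf 0 k c (\<lambda>_. 0) = c a" by (simp add: pf_def k a mon_def MI0)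
      then show ?thesis using "0.prems"(2) by simp
    qed (use "0.prems"(1) hom_zero in auto)
  qed
next
  case (Suc N)
  have sl0: "slice N m c = (\<lambda>_. 0)" if m: "m \<le> k" for m
  proof (rule Suc.IH)
    show "hom_poly_coeffs N (k - m) (slice N m c)" by (rule slice_hom[OF Suc.prems(1)])
    fix x
    have "\<And>t. (\<Sum>m\<le>k. t ^ m * pf N (k - m) (slice N m c) x) = 0"
    proof -
      fix t
      have "pf (Suc N) k c (x(N:=t)) = 0" by (rule Suc.prems(2))
      moreover have "\<And>m. pf N (k - m) (slice N m c) (x(N:=t)) = pf N (k - m) (slice N m c) x"
        by (rule pf_cong) auto
      ultimately show "(\<Sum>m\<le>k. t ^ m * pf N (k - m) (slice N m c) x) = 0"
        by (simp add: pf_slice)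
    qed
    from poly_coeffs_zero[OF this m] show "pf N (k - m) (slice N m c) x = 0" .
  qed
  show ?case
  proof
    fix a
    show "c a = 0"
    proof (cases "a N \<le> k")
      case True
      then show ?thesis using sl0[of "a N"] c_slice[of c a N] by (auto simp: fun_eq_iff)
    next
      case False
      then show ?thesis using slice_big[OF Suc.prems(1), of "a N"] c_slice[of c a N]
        by (auto simp: fun_eq_iff)
    qed
  qed
qed

lemma REIX:
  assumes "i < N"
  shows "(\<Sum>a\<in>MI N (d+2). if 2 \<le> a i then F a else 0) = (\<Sum>b\<in>MI N d. F (b(i := b i + 2)))"
proof -
  have "(\<Sum>a\<in>MI N (d+2). if 2 \<le> a i then F a else 0) = (\<Sum>a\<in>{a\<in>MI N (d+2). 2 \<le> a i}. F a)"
    by (simp add: sum.inter_filter[symmetric] finite_MI)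
  also have "\<dots> = (\<Sum>b\<in>MI N d. F (b(i := b i + 2)))"
  proof (rule sum.reindex_bij_witness[where j="\<lambda>a. a(i := a i - 2)" and i="\<lambda>b. b(i := b i + 2)"])
    fix a assume a: "a \<in> {a \<in> MI N (d + 2). 2 \<le> a i}"
    then show "(a(i := a i - 2))(i := (a(i := a i - 2)) i + 2) = a" by (auto simp: fun_eq_iff)
    have "(\<Sum>j<N. a j) = (\<Sum>j<N. (a(i := a i - 2)) j) + 2"
    proof -
      have "(\<Sum>j<N. a j) = a i + (\<Sum>j\<in>{..<N}-{i}. a j)" using assms by (simp add: sum.remove)
      moreover have "(\<Sum>j<N. (a(i := a i - 2)) j) = (a i - 2) + (\<Sum>j\<in>{..<N}-{i}. a j)"
        using assms by (simp add: sum.remove)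
      moreover have "2 \<le> a i" using a by simp
      ultimately show ?thesis by linarith
    qed
    then show "a(i := a i - 2) \<in> MI N d" using a assms by (auto simp: MI_def)
    have "(a(i := a i - 2))(i := (a(i := a i - 2)) i + 2) = a" using a by (auto simp: fun_eq_iff)
    then show "F ((a(i := a i - 2))(i := (a(i := a i - 2)) i + 2)) = F a" by simp
  next
    fix b assume b: "b \<in> MI N d"
    show "(b(i := b i + 2))(i := (b(i := b i + 2)) i - 2) = b" by auto
    have "(\<Sum>j<N. (b(i := b i + 2)) j) = (b i + 2) + (\<Sum>j\<in>{..<N}-{i}. b j)"
      using assms by (simp add: sum.remove)
    moreover have "(\<Sum>j<N. b j) = b i + (\<Sum>j\<in>{..<N}-{i}. b j)" using assms by (simp add: sum.remove)
    ultimately show "b(i := b i + 2) \<in> {a \<in> MI N (d + 2). 2 \<le> a i}" using b assms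
      by (auto simp: MI_def)
  qed
  finally show ?thesis .
qed

lemma gen_lin:
  "lens_gen q p (\<lambda>i. a * x i + b * y i) = (\<lambda>i. a * lens_gen q p x i + b * lens_gen q p y i)"
  by (auto simp: lens_gen_def Let_def fun_eq_iff algebra_simps)

lemma gen_scale: "lens_gen q p (\<lambda>i. t * x i) = (\<lambda>i. t * lens_gen q p x i)"
  by (auto simp: lens_gen_def Let_def fun_eq_iff algebra_simps)

lemma gen_zero: "lens_gen q p (\<lambda>i. 0) = (\<lambda>i. 0)"
  by (auto simp: lens_gen_def Let_def fun_eq_iff)

lemma gen_high: "2 * length p \<le> i \<Longrightarrow> lens_gen q p x i = x i"
  by (auto simp: lens_gen_def)

lemma gen_cong:
  assumes "\<And>i. i < N \<Longrightarrow> x i = y i" "2 * length p \<le> N" "i < N"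
  shows "lens_gen q p x i = lens_gen q p y i"
proof (cases "i < 2 * length p")
  case True
  have "i + 1 < N" if "even i"
  proof -
    from that obtain k where "i = 2 * k" by (rule evenE)
    then show ?thesis using True assms(2) by presburger
  qed
  moreover have "i - 1 < N" using assms(3) by linarith
  ultimately show ?thesis using assms True by (auto simp: lens_gen_def Let_def)
next
  case False
  then show ?thesis using assms by (simp add: gen_high)
qed

lemma gen_upd:
  assumes "2 * length p \<le> N"
  shows "lens_gen q p (x(N:=t)) = (lens_gen q p x)(N := t)"
proof
  fix i
  show "lens_gen q p (x(N := t)) i = ((lens_gen q p x)(N := t)) i"
  proof (cases "i < 2 * length p")
    case True
    have "i + 1 \<noteq> N" if "even i"
    proof -
      from that obtain k where "i = 2 * k" by (rule evenE)
      then show ?thesis using True assms by presburger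
    qed
    moreover have "i - 1 \<noteq> N" "i \<noteq> N" using True assms by linarith+
    ultimately show ?thesis using True by (auto simp: lens_gen_def Let_def)
  next
    case False
    then show ?thesis by (simp add: gen_high)
  qed
qed

lemma sum_pairs: "(\<Sum>i<2*n. f i) = (\<Sum>j<n. f (2*j) + f (2*j+1))" for f :: "nat \<Rightarrow> real"
  by (induction n) (simp_all add: algebra_simps)

lemma gen_norm:
  assumes "2 * length p \<le> N"
  shows "(\<Sum>i<N. (lens_gen q p x i)^2) = (\<Sum>i<N. (x i)^2)"
proof -
  let ?g = "lens_gen q p x" and ?n = "length p"
  have split: "(\<Sum>i<N. f i) = (\<Sum>i<2*?n. f i) + (\<Sum>i\<in>{2*?n..<N}. f i)" for f :: "nat \<Rightarrow> real"
    using assms by (metis atLeast0LessThan sum.atLeastLessThan_concat zero_le)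
  have hi: "(\<Sum>i\<in>{2*?n..<N}. (?g i)^2) = (\<Sum>i\<in>{2*?n..<N}. (x i)^2)"
    by (intro sum.cong refl) (simp add: gen_high)
  have lo: "(\<Sum>i<2*?n. (?g i)^2) = (\<Sum>i<2*?n. (x i)^2)"
    unfolding sum_pairs
  proof (intro sum.cong refl)
    fix j assume j: "j \<in> {..<?n}"
    define t where "t = 2 * pi * real_of_int (p ! j) / real q"
    have e: "?g (2*j) = cos t * x (2*j) + sin t * x (2*j+1)"
      using j by (simp add: lens_gen_def Let_def t_def)
    have o: "?g (2*j+1) = - sin t * x (2*j) + cos t * x (2*j+1)"
      using j by (simp add: lens_gen_def Let_def t_def)
    have sc: "(sin t)^2 + (cos t)^2 = 1" by simp
    show "(?g (2*j))^2 + (?g (2*j+1))^2 = (x (2*j))^2 + (x (2*j+1))^2"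
    proof -
      have "(?g (2*j))^2 + (?g (2*j+1))^2 = ((sin t)^2 + (cos t)^2) * ((x (2*j))^2 + (x (2*j+1))^2)"
        unfolding e o power2_eq_square by algebra
      then show ?thesis using sc by simp
    qed
  qed
  show ?thesis using split[of "\<lambda>i. (?g i)^2"] split[of "\<lambda>i. (x i)^2"] hi lo by simp
qed

lemma gen_sphere:
  assumes "2 * length p \<le> N" "x \<in> sphere_pts N"
  shows "lens_gen q p x \<in> sphere_pts N"
  using assms gen_norm[OF assms(1), of q x] by (auto simp: sphere_pts_def gen_high)

lemma sphere_decomp:
  assumes "0 < N"
  shows "\<exists>r y. y \<in> sphere_pts N \<and> (\<forall>i<N. x i = r * y i)"
proof (cases "(\<Sum>i<N. (x i)^2) = 0")
  case True
  then have "\<forall>i<N. x i = 0"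
    by (subst (asm) sum_nonneg_eq_0_iff) auto
  moreover have "(\<lambda>i. if i = 0 then 1 else 0::real) \<in> sphere_pts N"
  proof -
    have "(\<Sum>i<N. (if i = 0 then 1 else 0::real)^2) = (\<Sum>i<N. (if i = 0 then 1 else 0::real))"
      by (intro sum.cong) auto
    then show ?thesis using assms by (simp add: sphere_pts_def)
  qed
  ultimately show ?thesis by (intro exI[of _ 0] exI[of _ "\<lambda>i. if i = 0 then 1 else 0::real"]) auto
next
  case False
  define s where "s = (\<Sum>i<N. (x i)^2)"
  have s: "s > 0" using False by (simp add: s_def sum_nonneg order_le_neq_trans)
  define y where "y = (\<lambda>i. if i < N then x i / sqrt s else 0)"
  have "(\<Sum>i<N. (y i)^2) = (\<Sum>i<N. (x i)^2 / s)"
    using s by (intro sum.cong refl) (simp add: y_def power_divide)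
  also have "\<dots> = 1" using s by (simp add: sum_divide_distrib[symmetric] s_def)
  finally have "y \<in> sphere_pts N" by (simp add: sphere_pts_def y_def)
  moreover have "\<forall>i<N. x i = sqrt s * y i" using s by (simp add: y_def)
  ultimately show ?thesis by blast
qed

lemma sphere_vanish:
  assumes "0 < N" "\<And>x. x \<in> sphere_pts N \<Longrightarrow> pf N k c x = 0"
  shows "pf N k c x = 0"
proof -
  obtain r y where y: "y \<in> sphere_pts N" "\<forall>i<N. x i = r * y i" using sphere_decomp[OF assms(1)] by blast
  have "pf N k c x = pf N k c (\<lambda>i. r * y i)" using y by (intro pf_cong) auto
  also have "\<dots> = 0" using assms(2)[OF y(1)] by (simp add: pf_scale)
  finally show ?thesis .
qed

lemma sphere_inv:
  assumes "0 < N" "2 * length p \<le> N"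
    and "\<And>x. x \<in> sphere_pts N \<Longrightarrow> pf N k c (lens_gen q p x) = pf N k c x"
  shows "pf N k c (lens_gen q p x) = pf N k c x"
proof -
  obtain r y where y: "y \<in> sphere_pts N" "\<forall>i<N. x i = r * y i" using sphere_decomp[OF assms(1)] by blast
  have "pf N k c (lens_gen q p x) = pf N k c (lens_gen q p (\<lambda>i. r * y i))"
    using y assms(2) by (intro pf_cong gen_cong) auto
  also have "\<dots> = r ^ k * pf N k c (lens_gen q p y)" by (simp add: gen_scale pf_scale)
  also have "\<dots> = r ^ k * pf N k c y" using assms(3)[OF y(1)] by simp
  also have "\<dots> = pf N k c (\<lambda>i. r * y i)" by (simp add: pf_scale)
  also have "\<dots> = pf N k c x" using y by (intro pf_cong) auto
  finally show ?thesis .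
qed

context vector_space begin

lemma span_disjoint_zero:
  assumes B: "independent B" and "A1 \<subseteq> B" "A2 \<subseteq> B" "A1 \<inter> A2 = {}"
    and x: "x \<in> span A1" "x \<in> span A2"
  shows "x = 0"
proof -
  have r1: "representation B x = representation A1 x" by (rule representation_extend) (use assms in auto)
  have r2: "representation B x = representation A2 x" by (rule representation_extend) (use assms in auto)
  have z: "representation B x = (\<lambda>b. 0)"
  proof
    fix b show "representation B x b = 0"
    proof (rule ccontr)
      assume h: "representation B x b \<noteq> 0"
      then have "b \<in> A1" using r1 representation_ne_zero[of A1 x b] by simp
      moreover have "b \<in> A2" using h r2 representation_ne_zero[of A2 x b] by simp
      ultimately show False using assms(4) by auto
    qed
  qed
  have "x \<in> span B" using assms span_mono by blast
  then show ?thesis using sum_nonzero_representation_eq[OF B, of x] z by simp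
qed

lemma subspace_eq_dim:
  assumes A: "subspace A" and V: "subspace V" and AV: "A \<subseteq> V" and F: "V \<subseteq> span F" "finite F"
    and d: "dim A = dim V"
  shows "A = V"
proof -
  obtain BA where BA: "BA \<subseteq> A" "independent BA" "A \<subseteq> span BA" "card BA = dim A"
    using basis_exists by blast
  obtain BV where BV: "BV \<subseteq> V" "independent BV" "V \<subseteq> span BV" "card BV = dim V"
    using basis_exists by blast
  have fBV: "finite BV" using independent_span_bound[OF F(2) BV(2)] BV(1) F(1) by auto
  have fBA: "finite BA" using independent_span_bound[OF F(2) BA(2)] BA(1) AV F(1) by auto
  have "V \<subseteq> A"
  proof
    fix x assume xV: "x \<in> V"
    show "x \<in> A"
    proof (rule ccontr)
      assume xA: "x \<notin> A"
      have "span BA \<subseteq> A" using BA(1) A by (simp add: span_minimal)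
      then have "x \<notin> span BA" using xA by auto
      then have ind: "independent (insert x BA)" using BA(2) by (rule independent_insertI)
      have "insert x BA \<subseteq> span BV" using xV BA(1) AV BV(3) by auto
      then have "card (insert x BA) \<le> card BV" using independent_span_bound[OF fBV ind] by auto
      moreover have "x \<notin> BA" using xA BA(1) by auto
      ultimately show False using fBA BA(4) BV(4) d by simp
    qed
  qed
  then show ?thesis using AV by auto
qed

end

context vector_space_pair begin

lemma dim_image_eq':
  assumes lf: "Vector_Spaces.linear s1 s2 f"
    and fi: "inj_on f (vs1.span S)"
  shows "vs2.dim (f ` S) = vs1.dim S"
proof -
  interpret lf: Vector_Spaces.linear s1 s2 f by fact
  obtain B where B: "B \<subseteq> S" "vs1.independent B" "S \<subseteq> vs1.span B" "card B = vs1.dim S"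
    using vs1.basis_exists[of S] by auto
  then have "vs1.span S = vs1.span B"
    using vs1.span_mono[of B S] vs1.span_mono[of S "vs1.span B"] vs1.span_span[of B] by auto
  moreover have "card (f ` B) = card B"
    using assms card_image[of f B] inj_on_subset[of f "vs1.span S" B] B vs1.span_superset by auto
  moreover have "(f ` B) \<subseteq> (f ` S)"
    using B by auto
  ultimately show ?thesis
    by (metis B(2) B(4) fi lf.dependent_inj_imageD lf.span_image vs2.dim_eq_card_independent vs2.dim_span)
qed

lemma rank_nullity':
  assumes lf: "Vector_Spaces.linear s1 s2 f" and S: "vs1.subspace S" and F: "S \<subseteq> vs1.span F" "finite F"
  shows "vs1.dim S = vs1.dim {x\<in>S. f x = 0} + vs2.dim (f ` S)"
proof -
  interpret lf: Vector_Spaces.linear s1 s2 f by fact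
  let ?K = "{x\<in>S. f x = 0}"
  obtain BK where BK: "BK \<subseteq> ?K" "vs1.independent BK" "?K \<subseteq> vs1.span BK" "card BK = vs1.dim ?K"
    using vs1.basis_exists by blast
  obtain B where B: "BK \<subseteq> B" "B \<subseteq> S" "vs1.independent B" "S \<subseteq> vs1.span B"
    using vs1.maximal_independent_subset_extend[of BK S] BK by auto
  have fB: "finite B" using vs1.independent_span_bound[OF F(2) B(3)] B(2) F(1) by auto
  have cB: "card B = vs1.dim S" using vs1.basis_card_eq_dim[OF B(2) B(4) B(3)] .
  define C where "C = B - BK"
  have cBC: "card B = card BK + card C"
    using fB B(1) by (simp add: C_def card_Diff_subset finite_subset card_mono)
  have spanB: "vs1.span B = S" using B(2,4) S vs1.span_minimal by blast
  have spanC: "vs1.span C \<subseteq> S" using spanB vs1.span_mono[of C B] by (auto simp: C_def)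
  have inj: "inj_on f (vs1.span C)"
  proof (subst lf.inj_on_iff_eq_0)
    show "vs1.subspace (vs1.span C)" by simp
    show "\<forall>x\<in>vs1.span C. f x = 0 \<longrightarrow> x = 0"
    proof (intro ballI impI)
      fix x assume xC: "x \<in> vs1.span C" and fx: "f x = 0"
      then have "x \<in> ?K" using spanC by auto
      then have "x \<in> vs1.span BK" using BK(3) by auto
      then show "x = 0" using vs1.span_disjoint_zero[OF B(3), of BK C x] xC B(1)
        by (auto simp: C_def)
    qed
  qed
  have fBK0: "f ` BK \<subseteq> {0}" using BK(1) by auto
  have "f ` S = vs2.span (f ` B)" using spanB lf.span_image by metis
  also have "f ` B = f ` BK \<union> f ` C" using B(1) by (auto simp: C_def)
  also have "vs2.span (f ` BK \<union> f ` C) = vs2.span (f ` C)"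
  proof -
    have "vs2.span (f ` BK \<union> f ` C) \<subseteq> vs2.span (insert 0 (f ` C))"
      using fBK0 by (intro vs2.span_mono) auto
    then show ?thesis using vs2.span_mono[of "f ` C" "f ` BK \<union> f ` C"] by auto
  qed
  finally have "vs2.dim (f ` S) = vs2.dim (f ` C)" by simp
  also have "\<dots> = vs1.dim C" using dim_image_eq'[OF lf inj] .
  also have "\<dots> = card C"
    using vs1.dim_eq_card_independent vs1.independent_mono[OF B(3)] by (auto simp: C_def)
  finally show ?thesis using cB cBC BK(4) by simp
qed

end

lemma vs_fun: "vector_space (\<lambda>(c::real) (f::'a\<Rightarrow>real) x. c * f x)"
  unfolding vector_space_def module_def by (auto simp: fun_eq_iff algebra_simps)

lemma vsp_fun: "vector_space_pair (\<lambda>(c::real) (f::'a\<Rightarrow>real) x. c * f x) (\<lambda>(c::real) (f::'b\<Rightarrow>real) x. c * f x)"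
  unfolding vector_space_pair_def using vs_fun vs_fun by auto

definition tay2 :: "(real \<Rightarrow> real) \<Rightarrow> real" where
  "tay2 \<phi> = (THE b. \<exists>a n. (\<forall>r. \<phi> r = (\<Sum>m\<le>n. a m * r^m)) \<and> b = (if 2 \<le> n then a 2 else 0))"

lemma sum_ext_le:
  fixes a :: "nat \<Rightarrow> real"
  assumes "n \<le> M"
  shows "(\<Sum>m\<le>M. (if m \<le> n then a m else 0) * r^m) = (\<Sum>m\<le>n. a m * r^m)"
proof -
  have "(\<Sum>m\<le>M. (if m \<le> n then a m else 0) * r^m) = (\<Sum>m\<le>M. if m \<in> {..n} then a m * r^m else 0)"
    by (intro sum.cong) auto
  also have "\<dots> = (\<Sum>m\<in>{..M} \<inter> {..n}. a m * r^m)" by (rule sum.inter_restrict[symmetric]) simp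
  also have "{..M} \<inter> {..n} = {..n}" using assms by auto
  finally show ?thesis .
qed

lemma tay2_unique:
  fixes a a' :: "nat \<Rightarrow> real"
  assumes "\<forall>r. \<phi> r = (\<Sum>m\<le>n. a m * r^m)" "\<forall>r. \<phi> r = (\<Sum>m\<le>n'. a' m * r^m)"
  shows "(if 2 \<le> n then a 2 else 0) = (if 2 \<le> n' then a' 2 else 0)"
proof -
  define M where "M = max n n'"
  define e where "e m = (if m \<le> n then a m else 0) - (if m \<le> n' then a' m else 0)" for m
  have "\<And>r. (\<Sum>m\<le>M. e m * r^m) = 0"
  proof -
    fix r
    have "(\<Sum>m\<le>M. e m * r^m) = (\<Sum>m\<le>M. (if m \<le> n then a m else 0) * r^m) - (\<Sum>m\<le>M. (if m \<le> n' then a' m else 0) * r^m)"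
      by (simp add: e_def algebra_simps sum_subtractf)
    also have "\<dots> = \<phi> r - \<phi> r" using assms sum_ext_le[of n M a r] sum_ext_le[of n' M a' r]
      by (simp add: M_def)
    finally show "(\<Sum>m\<le>M. e m * r^m) = 0" by simp
  qed
  then have "\<forall>m\<le>M. e m = 0" using polyfun_eq_0[of e M] by (simp add: mult.commute)
  then show ?thesis
    by (cases "2 \<le> M") (auto simp: e_def M_def split: if_splits)
qed

lemma tay2_eq:
  fixes a :: "nat \<Rightarrow> real"
  assumes "\<And>r. \<phi> r = (\<Sum>m\<le>n. a m * r^m)"
  shows "tay2 \<phi> = (if 2 \<le> n then a 2 else 0)"
  unfolding tay2_def
proof (rule the_equality)
  show "\<exists>a' n'. (\<forall>r. \<phi> r = (\<Sum>m\<le>n'. a' m * r ^ m)) \<and> (if 2 \<le> n then a 2 else 0) = (if 2 \<le> n' then a' 2 else 0)"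
    using assms by blast
  fix b assume "\<exists>a' n'. (\<forall>r. \<phi> r = (\<Sum>m\<le>n'. a' m * r ^ m)) \<and> b = (if 2 \<le> n' then a' 2 else 0)"
  then obtain a' n' where "\<forall>r. \<phi> r = (\<Sum>m\<le>n'. a' m * r ^ m)" "b = (if 2 \<le> n' then a' 2 else 0)" by blast
  then show "b = (if 2 \<le> n then a 2 else 0)" using tay2_unique[where \<phi>=\<phi> and n=n and a=a and n'=n' and a'=a'] assms by auto
qed

definition ee :: "nat \<Rightarrow> nat \<Rightarrow> real" where "ee i = (\<lambda>j. if j = i then 1 else 0)"

lemma binom_ext:
  fixes y r :: real
  assumes "n \<le> K"
  shows "(y + r) ^ n = (\<Sum>m\<le>K. real (n choose m) * r ^ m * y ^ (n - m))"
proof -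
  have "(y + r) ^ n = (r + y) ^ n" by (simp add: add.commute)
  also have "\<dots> = (\<Sum>m\<le>n. real (n choose m) * r ^ m * y ^ (n - m))" by (rule binomial_ring)
  also have "\<dots> = (\<Sum>m\<le>K. real (n choose m) * r ^ m * y ^ (n - m))"
    using assms by (intro sum.mono_neutral_left) (auto simp: binomial_eq_0)
  finally show ?thesis .
qed

lemma MI_le: "a \<in> MI N k \<Longrightarrow> i < N \<Longrightarrow> a i \<le> k"
  unfolding MI_def by (auto intro: member_le_sum[of i "{..<N}" a, simplified] order_trans)

lemma mon_coord:
  assumes "i < N"
  shows "mon N a (\<lambda>j. y j + r * ee i j) = (y i + r) ^ a i * (\<Prod>j\<in>{..<N}-{i}. y j ^ a j)"
proof -
  have "mon N a (\<lambda>j. y j + r * ee i j) = (y i + r) ^ a i * (\<Prod>j\<in>{..<N}-{i}. (y j + r * ee i j) ^ a j)"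
    using assms by (simp add: mon_def prod.remove ee_def)
  also have "(\<Prod>j\<in>{..<N}-{i}. (y j + r * ee i j) ^ a j) = (\<Prod>j\<in>{..<N}-{i}. y j ^ a j)"
    by (intro prod.cong) (auto simp: ee_def)
  finally show ?thesis .
qed

lemma tay2_coord:
  assumes "i < N"
  shows "tay2 (\<lambda>r. pf N k c (\<lambda>j. y j + r * ee i j)) =
    (\<Sum>a\<in>MI N k. c a * (real (a i choose 2) * y i ^ (a i - 2) * (\<Prod>j\<in>{..<N}-{i}. y j ^ a j)))"
proof -
  let ?P = "\<lambda>a. (\<Prod>j\<in>{..<N}-{i}. y j ^ a j)"
  define A where "A m = (\<Sum>a\<in>MI N k. c a * (real (a i choose m) * y i ^ (a i - m) * ?P a))" for m
  have "\<And>r. pf N k c (\<lambda>j. y j + r * ee i j) = (\<Sum>m\<le>k+2. A m * r^m)"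
  proof -
    fix r
    have "pf N k c (\<lambda>j. y j + r * ee i j) = (\<Sum>a\<in>MI N k. c a * ((\<Sum>m\<le>k+2. real (a i choose m) * r ^ m * y i ^ (a i - m)) * ?P a))"
      unfolding pf_def
    proof (intro sum.cong refl)
      fix a assume a: "a \<in> MI N k"
      have "a i \<le> k + 2" using MI_le[OF a assms] by simp
      then show "c a * mon N a (\<lambda>j. y j + r * ee i j) = c a * ((\<Sum>m\<le>k+2. real (a i choose m) * r ^ m * y i ^ (a i - m)) * ?P a)"
        by (simp add: mon_coord[OF assms] binom_ext)
    qed
    also have "\<dots> = (\<Sum>a\<in>MI N k. \<Sum>m\<le>k+2. c a * (real (a i choose m) * y i ^ (a i - m) * ?P a) * r ^ m)"
      by (intro sum.cong refl) (simp add: sum_distrib_left sum_distrib_right algebra_simps)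
    also have "\<dots> = (\<Sum>m\<le>k+2. A m * r^m)"
      by (subst sum.swap) (simp add: A_def sum_distrib_right)
    finally show "pf N k c (\<lambda>j. y j + r * ee i j) = (\<Sum>m\<le>k+2. A m * r^m)" .
  qed
  from tay2_eq[where n="k+2" and a=A, OF this] show ?thesis by (simp add: A_def)
qed

lemma two_choose2: "2 * real (n choose 2) = real n * (real n - 1)"
proof (cases "n \<ge> 1")
  case True
  have "even (n * (n - 1))" by (cases "even n") auto
  then have "2 * (n choose 2) = n * (n - 1)" by (simp add: choose_two)
  then have "real (2 * (n choose 2)) = real (n * (n - 1))" by simp
  then show ?thesis using True by (simp add: of_nat_diff)
next
  case False
  then have "n = 0" by simp
  then show ?thesis by simp
qed

lemma lap_tay:
  assumes "hom_poly_coeffs N k c"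
  shows "pf N (k-2) (laplacian_coeffs N c) y = 2 * (\<Sum>i<N. tay2 (\<lambda>r. pf N k c (\<lambda>j. y j + r * ee i j)))"
proof (cases "k < 2")
  case True
  have "laplacian_coeffs N c b = 0" for b
  proof -
    have "c (b(i := b i + 2)) = 0" if "i < N" for i
    proof (rule hom_zero[OF assms])
      have "b i + 2 \<le> (\<Sum>j<N. (b(i := b i + 2)) j)"
        using member_le_sum[of i "{..<N}" "b(i := b i + 2)"] that by simp
      then show "b(i := b i + 2) \<notin> MI N k" using True by (auto simp: MI_def)
    qed
    then show ?thesis by (simp add: laplacian_coeffs_def)
  qed
  then have l: "laplacian_coeffs N c = (\<lambda>_. 0)" by auto
  have "tay2 (\<lambda>r. pf N k c (\<lambda>j. y j + r * ee i j)) = 0" if "i < N" for i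
  proof -
    have z: "c a * (real (a i choose 2) * y i ^ (a i - 2) * (\<Prod>j\<in>{..<N}-{i}. y j ^ a j)) = 0" if "a \<in> MI N k" for a
      using MI_le[OF that \<open>i < N\<close>] True by (simp add: binomial_eq_0)
    show ?thesis unfolding tay2_coord[OF that] by (intro sum.neutral ballI z)
  qed
  then show ?thesis by (simp add: l)
next
  case False
  then obtain d where k: "k = d + 2" by (metis add.commute le_Suc_ex not_less)
  let ?P = "\<lambda>i a. (\<Prod>j\<in>{..<N}-{i}. y j ^ a j)"
  have "pf N (k-2) (laplacian_coeffs N c) y =
      (\<Sum>b\<in>MI N d. \<Sum>i<N. real ((b i + 2) * (b i + 1)) * c (b(i := b i + 2)) * mon N b y)"
    by (simp add: pf_def k laplacian_coeffs_def sum_distrib_right)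
  also have "\<dots> = (\<Sum>i<N. \<Sum>b\<in>MI N d. real ((b i + 2) * (b i + 1)) * c (b(i := b i + 2)) * mon N b y)"
    by (rule sum.swap)
  also have "\<dots> = (\<Sum>i<N. 2 * (\<Sum>a\<in>MI N k. c a * (real (a i choose 2) * y i ^ (a i - 2) * ?P i a)))"
  proof (intro sum.cong refl)
    fix i assume i: "i \<in> {..<N}"
    define F where "F a = real (a i) * (real (a i) - 1) * c a * mon N (a(i := a i - 2)) y" for a
    have "(\<Sum>b\<in>MI N d. real ((b i + 2) * (b i + 1)) * c (b(i := b i + 2)) * mon N b y)
        = (\<Sum>b\<in>MI N d. F (b(i := b i + 2)))"
    proof (intro sum.cong refl)
      fix b :: "nat \<Rightarrow> nat"
      have "(b(i := b i + 2))(i := b i + 2 - 2) = b" by auto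
      then show "real ((b i + 2) * (b i + 1)) * c (b(i := b i + 2)) * mon N b y = F (b(i := b i + 2))"
        by (simp add: F_def algebra_simps)
    qed
    also have "\<dots> = (\<Sum>a\<in>MI N (d+2). if 2 \<le> a i then F a else 0)"
      using i REIX[where i=i and N=N and d=d and F=F] by simp
    also have "\<dots> = (\<Sum>a\<in>MI N k. 2 * (c a * (real (a i choose 2) * y i ^ (a i - 2) * ?P i a)))"
      unfolding k
    proof (intro sum.cong refl)
      fix a
      have m: "mon N (a(i := a i - 2)) y = y i ^ (a i - 2) * ?P i a"
      proof -
        have "mon N (a(i := a i - 2)) y = y i ^ (a i - 2) * (\<Prod>j\<in>{..<N}-{i}. y j ^ (a(i := a i - 2)) j)"
          using i by (simp add: mon_def prod.remove)
        also have "(\<Prod>j\<in>{..<N}-{i}. y j ^ (a(i := a i - 2)) j) = ?P i a"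
          by (intro prod.cong) auto
        finally show ?thesis .
      qed
      show "(if 2 \<le> a i then F a else 0) = 2 * (c a * (real (a i choose 2) * y i ^ (a i - 2) * ?P i a))"
      proof (cases "2 \<le> a i")
        case True
        let ?Y = "y i ^ (a i - 2) * ?P i a"
        have "2 * (c a * (real (a i choose 2) * y i ^ (a i - 2) * ?P i a)) = c a * (2 * real (a i choose 2)) * ?Y"
          by (simp only: ac_simps)
        also have "\<dots> = F a" unfolding two_choose2 F_def m by (simp only: ac_simps)
        finally show ?thesis using True by simp
      next
        case False
        then show ?thesis by (simp add: binomial_eq_0)
      qed
    qed
    finally show "(\<Sum>b\<in>MI N d. real ((b i + 2) * (b i + 1)) * c (b(i := b i + 2)) * mon N b y) =
       2 * (\<Sum>a\<in>MI N k. c a * (real (a i choose 2) * y i ^ (a i - 2) * ?P i a))"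
      by (simp add: sum_distrib_left)
  qed
  also have "\<dots> = 2 * (\<Sum>i<N. tay2 (\<lambda>r. pf N k c (\<lambda>j. y j + r * ee i j)))"
    by (simp add: tay2_coord sum_distrib_left)
  finally show ?thesis .
qed

definition ev2 :: "real poly poly \<Rightarrow> real \<Rightarrow> real \<Rightarrow> real" where
  "ev2 P s t = poly (poly P [:t:]) s"

lemma ev2_add[simp]: "ev2 (P + Q) s t = ev2 P s t + ev2 Q s t"
  by (simp add: ev2_def)
lemma ev2_mult[simp]: "ev2 (P * Q) s t = ev2 P s t * ev2 Q s t"
  by (simp add: ev2_def)
lemma ev2_sum: "ev2 (sum f A) s t = (\<Sum>a\<in>A. ev2 (f a) s t)"
  by (simp add: ev2_def poly_sum)
lemma ev2_prod: "ev2 (prod f A) s t = (\<Prod>a\<in>A. ev2 (f a) s t)"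
  by (simp add: ev2_def poly_prod)
lemma ev2_power[simp]: "ev2 (P ^ n) s t = ev2 P s t ^ n"
  by (simp add: ev2_def poly_power)
lemma ev2_const[simp]: "ev2 [:[:c:]:] s t = c"
  by (simp add: ev2_def)
lemma ev2_smult[simp]: "ev2 (smult a P) s t = poly a s * ev2 P s t"
  by (simp add: ev2_def)
lemma ev2_L: "ev2 [: [:z, u:], [:w:] :] s t = z + s * u + t * w"
  by (simp add: ev2_def algebra_simps)

lemma poly_ext: fixes p :: "'a::comm_ring_1 poly" assumes "degree p \<le> D" shows "poly p x = (\<Sum>i\<le>D. coeff p i * x^i)"
  using assms by (subst poly_altdef) (rule sum.mono_neutral_left, auto simp: coeff_eq_0)

lemma ev2_expand:
  "\<exists>D\<ge>1. \<forall>s t. ev2 P s t = (\<Sum>l\<le>D. \<Sum>j\<le>D. coeff (coeff P l) j * s^j * t^l)"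
proof -
  define D where "D = 1 + degree P + (\<Sum>l\<le>degree P. degree (coeff P l))"
  have dP: "degree P \<le> D" by (simp add: D_def)
  have dc: "degree (coeff P l) \<le> D" for l
  proof (cases "l \<le> degree P")
    case True
    then have "degree (coeff P l) \<le> (\<Sum>l\<le>degree P. degree (coeff P l))"
      by (intro member_le_sum) auto
    then show ?thesis by (simp add: D_def)
  next
    case False
    then show ?thesis by (simp add: coeff_eq_0)
  qed
  have "ev2 P s t = (\<Sum>l\<le>D. \<Sum>j\<le>D. coeff (coeff P l) j * s^j * t^l)" for s t
  proof -
    have "ev2 P s t = poly (\<Sum>l\<le>D. coeff P l * [:t:]^l) s"
      by (simp add: ev2_def poly_ext[OF dP])
    also have "\<dots> = (\<Sum>l\<le>D. poly (coeff P l) s * t^l)"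
      by (simp add: poly_sum poly_power)
    also have "\<dots> = (\<Sum>l\<le>D. \<Sum>j\<le>D. coeff (coeff P l) j * s^j * t^l)"
      by (simp add: poly_ext[OF dc] sum_distrib_right)
    finally show ?thesis .
  qed
  then show ?thesis by (intro exI[of _ D]) (auto simp: D_def)
qed

lemma pf_ev2:
  "\<exists>P. \<forall>s t. pf N k c (\<lambda>j. z j + s * u j + t * w j) = ev2 P s t"
proof -
  define P where "P = (\<Sum>a\<in>MI N k. [:[:c a:]:] * (\<Prod>j<N. [: [:z j, u j:], [:w j:] :] ^ a j))"
  have "pf N k c (\<lambda>j. z j + s * u j + t * w j) = ev2 P s t" for s t
    by (simp add: P_def pf_def mon_def ev2_sum ev2_prod ev2_L)
  then show ?thesis by blast
qed

lemma regroup: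
  fixes X :: "nat \<Rightarrow> nat \<Rightarrow> real"
  shows "(\<Sum>l\<le>D. \<Sum>j\<le>D. X j l * r^(j+l)) = (\<Sum>m\<le>2*D. (\<Sum>l\<le>D. \<Sum>j\<le>D. if j + l = m then X j l else 0) * r^m)"
proof -
  have "(\<Sum>m\<le>2*D. (\<Sum>l\<le>D. \<Sum>j\<le>D. if j + l = m then X j l else 0) * r^m)
      = (\<Sum>m\<le>2*D. \<Sum>l\<le>D. \<Sum>j\<le>D. if j + l = m then X j l * r^(j+l) else 0)"
    unfolding sum_distrib_right by (intro sum.cong refl) auto
  also have "\<dots> = (\<Sum>l\<le>D. \<Sum>j\<le>D. \<Sum>m\<le>2*D. if j + l = m then X j l * r^(j+l) else 0)"
    by (simp add: sum.swap[of _ "{..2*D}"] sum.swap[of _ "{..D}" "{..2*D}"])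
  also have "\<dots> = (\<Sum>l\<le>D. \<Sum>j\<le>D. X j l * r^(j+l))"
    by (intro sum.cong refl) (auto simp: sum.delta)
  finally show ?thesis by simp
qed

lemma tay2_dir:
  "\<exists>A D. \<forall>\<alpha> \<beta>. tay2 (\<lambda>r. pf N k c (\<lambda>j. z j + r * (\<alpha> * u j + \<beta> * w j))) =
      (\<Sum>l\<le>D. \<Sum>j\<le>D. if j + l = 2 then A j l * \<alpha>^j * \<beta>^l else 0)"
proof -
  obtain P where P: "\<And>s t. pf N k c (\<lambda>j. z j + s * u j + t * w j) = ev2 P s t" using pf_ev2 by blast
  obtain D where D: "D \<ge> 1" "\<And>s t. ev2 P s t = (\<Sum>l\<le>D. \<Sum>j\<le>D. coeff (coeff P l) j * s^j * t^l)"
    using ev2_expand by blast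
  define A where "A j l = coeff (coeff P l) j" for j l
  have "tay2 (\<lambda>r. pf N k c (\<lambda>j. z j + r * (\<alpha> * u j + \<beta> * w j))) =
      (\<Sum>l\<le>D. \<Sum>j\<le>D. if j + l = 2 then A j l * \<alpha>^j * \<beta>^l else 0)" for \<alpha> \<beta>
  proof -
    define e where "e m = (\<Sum>l\<le>D. \<Sum>j\<le>D. if j + l = m then A j l * \<alpha>^j * \<beta>^l else 0)" for m
    have "\<And>r. pf N k c (\<lambda>j. z j + r * (\<alpha> * u j + \<beta> * w j)) = (\<Sum>m\<le>2*D. e m * r^m)"
    proof -
      fix r
      have "pf N k c (\<lambda>j. z j + r * (\<alpha> * u j + \<beta> * w j)) = pf N k c (\<lambda>j. z j + (r*\<alpha>) * u j + (r*\<beta>) * w j)"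
        by (simp add: algebra_simps)
      also have "\<dots> = (\<Sum>l\<le>D. \<Sum>j\<le>D. (A j l * \<alpha>^j * \<beta>^l) * r^(j+l))"
        unfolding P D(2) A_def by (intro sum.cong refl) (simp add: power_mult_distrib power_add algebra_simps)
      also have "\<dots> = (\<Sum>m\<le>2*D. e m * r^m)" unfolding e_def by (rule regroup)
      finally show "pf N k c (\<lambda>j. z j + r * (\<alpha> * u j + \<beta> * w j)) = (\<Sum>m\<le>2*D. e m * r^m)" .
    qed
    from tay2_eq[where n="2*D" and a=e, OF this] D(1) show ?thesis by (simp add: e_def)
  qed
  then show ?thesis by blast
qed

lemma rot_term:
  fixes cs sn :: real
  assumes "cs^2 + sn^2 = 1" "j + l = 2"
  shows "X * cs^j * (-sn)^l + X * sn^j * cs^l = X * 1^j * 0^l + X * 0^j * 1^l"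
proof -
  have "j = 0 \<and> l = 2 \<or> j = 1 \<and> l = 1 \<or> j = 2 \<and> l = 0" using assms(2) by arith
  then show ?thesis
  proof (elim disjE conjE)
    assume "j = 0" "l = 2"
    then show ?thesis using assms(1) by (simp add: distrib_left[symmetric] add.commute)
  next
    assume "j = 1" "l = 1"
    then show ?thesis by (simp add: algebra_simps)
  next
    assume "j = 2" "l = 0"
    then show ?thesis using assms(1) by (simp add: distrib_left[symmetric])
  qed
qed

lemma tay2_rot:
  fixes cs sn :: real
  assumes cs: "cs^2 + sn^2 = 1"
  shows "tay2 (\<lambda>r. pf N k c (\<lambda>j. z j + r * (cs * u j + (-sn) * w j)))
       + tay2 (\<lambda>r. pf N k c (\<lambda>j. z j + r * (sn * u j + cs * w j)))
       = tay2 (\<lambda>r. pf N k c (\<lambda>j. z j + r * u j)) + tay2 (\<lambda>r. pf N k c (\<lambda>j. z j + r * w j))"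
proof -
  obtain A D where AD: "\<And>\<alpha> \<beta>. tay2 (\<lambda>r. pf N k c (\<lambda>j. z j + r * (\<alpha> * u j + \<beta> * w j))) =
      (\<Sum>l\<le>D. \<Sum>j\<le>D. if j + l = 2 then A j l * \<alpha>^j * \<beta>^l else 0)"
    using tay2_dir by blast
  have u: "tay2 (\<lambda>r. pf N k c (\<lambda>j. z j + r * u j)) = tay2 (\<lambda>r. pf N k c (\<lambda>j. z j + r * (1 * u j + 0 * w j)))"
    by simp
  have w: "tay2 (\<lambda>r. pf N k c (\<lambda>j. z j + r * w j)) = tay2 (\<lambda>r. pf N k c (\<lambda>j. z j + r * (0 * u j + 1 * w j)))"
    by simp
  have t: "(if j+l=2 then A j l * cs^j * (-sn)^l else 0) + (if j+l = 2 then A j l * sn^j*cs^l else 0)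
     = (if j+l=2 then A j l * 1^j * 0^l else 0) + (if j+l=2 then A j l*0^j*1^l else 0)" for j l
    by (cases "j + l = 2") (simp_all only: if_True if_False rot_term[OF cs] add_0 simp_thms)
  show ?thesis unfolding u w AD
    by (simp only: sum.distrib[symmetric] t)
qed

lemma gen_ee_high:
  assumes "2 * length p \<le> i"
  shows "lens_gen q p (ee i) = ee i"
proof
  fix m
  show "lens_gen q p (ee i) m = ee i m"
  proof (cases "m < 2 * length p")
    case True
    then have "m \<noteq> i" "m - 1 \<noteq> i" using assms by auto
    moreover have "m + 1 \<noteq> i" if "even m"
    proof -
      from that obtain k where "m = 2 * k" by (rule evenE)
      then show ?thesis using True assms by presburger
    qed
    ultimately show ?thesis using True by (auto simp: lens_gen_def Let_def ee_def)
  next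
    case False
    then show ?thesis by (simp add: gen_high)
  qed
qed

lemma m_cases: fixes m :: nat obtains i where "m = 2 * i" | i where "m = 2 * i + 1"
  by (metis oddE evenE)

lemma gen_ee_even:
  fixes q :: nat
  assumes j: "j < length p"
  defines "t \<equiv> 2 * pi * real_of_int (p ! j) / real q"
  shows "lens_gen q p (ee (2*j)) = (\<lambda>m. cos t * ee (2*j) m + (- sin t) * ee (2*j+1) m)"
proof
  fix m
  show "lens_gen q p (ee (2*j)) m = cos t * ee (2*j) m + (- sin t) * ee (2*j+1) m"
  proof (cases m rule: m_cases)
    case (1 i)
    show ?thesis
    proof (cases "i < length p")
      case True
      then show ?thesis using 1 by (auto simp: lens_gen_def Let_def ee_def t_def)
    next
      case False
      then have "i \<noteq> j" using j by auto
      then show ?thesis using 1 False by (auto simp: lens_gen_def Let_def ee_def)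
    qed
  next
    case (2 i)
    show ?thesis
    proof (cases "i < length p")
      case True
      then show ?thesis using 2 by (auto simp: lens_gen_def Let_def ee_def t_def)
    next
      case False
      then have "i \<noteq> j" using j by auto
      then show ?thesis using 2 False by (auto simp: lens_gen_def Let_def ee_def)
    qed
  qed
qed

lemma gen_ee_odd:
  fixes q :: nat
  assumes j: "j < length p"
  defines "t \<equiv> 2 * pi * real_of_int (p ! j) / real q"
  shows "lens_gen q p (ee (2*j+1)) = (\<lambda>m. sin t * ee (2*j) m + cos t * ee (2*j+1) m)"
proof
  fix m
  show "lens_gen q p (ee (2*j+1)) m = sin t * ee (2*j) m + cos t * ee (2*j+1) m"
  proof (cases m rule: m_cases)
    case (1 i)
    show ?thesis
    proof (cases "i < length p")
      case True
      then show ?thesis using 1 by (auto simp: lens_gen_def Let_def ee_def t_def)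
    next
      case False
      then have "i \<noteq> j" using j by auto
      then show ?thesis using 1 False by (auto simp: lens_gen_def Let_def ee_def)
    qed
  next
    case (2 i)
    show ?thesis
    proof (cases "i < length p")
      case True
      then show ?thesis using 2 by (auto simp: lens_gen_def Let_def ee_def t_def)
    next
      case False
      then have "i \<noteq> j" using j by auto
      then show ?thesis using 2 False by (auto simp: lens_gen_def Let_def ee_def)
    qed
  qed
qed

lemma sum_rot:
  assumes N: "2 * length p \<le> N"
  shows "(\<Sum>i<N. tay2 (\<lambda>r. pf N k c (\<lambda>j. z j + r * lens_gen q p (ee i) j)))
       = (\<Sum>i<N. tay2 (\<lambda>r. pf N k c (\<lambda>j. z j + r * ee i j)))"
proof -
  let ?n = "length p"
  let ?T = "\<lambda>v. tay2 (\<lambda>r. pf N k c (\<lambda>j. z j + r * v j))"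
  have split: "(\<Sum>i<N. f i) = (\<Sum>i<2*?n. f i) + (\<Sum>i\<in>{2*?n..<N}. f i)" for f :: "nat \<Rightarrow> real"
    using N by (metis atLeast0LessThan sum.atLeastLessThan_concat zero_le)
  have hi: "(\<Sum>i\<in>{2*?n..<N}. ?T (lens_gen q p (ee i))) = (\<Sum>i\<in>{2*?n..<N}. ?T (ee i))"
    by (intro sum.cong refl) (simp add: gen_ee_high)
  have lo: "(\<Sum>i<2*?n. ?T (lens_gen q p (ee i))) = (\<Sum>i<2*?n. ?T (ee i))"
    unfolding sum_pairs
  proof (intro sum.cong refl)
    fix j assume j: "j \<in> {..<?n}"
    define t where "t = 2 * pi * real_of_int (p ! j) / real q"
    have cs: "(cos t)^2 + (sin t)^2 = 1" by simp
    show "?T (lens_gen q p (ee (2*j))) + ?T (lens_gen q p (ee (2*j+1))) = ?T (ee (2*j)) + ?T (ee (2*j+1))"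
    proof -
      have j': "j < length p" using j by simp
      show ?thesis using tay2_rot[OF cs, of N k c z "ee (2*j)" "ee (2*j+1)"]
        unfolding gen_ee_even[OF j', of q] gen_ee_odd[OF j', of q] t_def by simp
    qed
  qed
  show ?thesis using split[of "\<lambda>i. ?T (lens_gen q p (ee i))"] split[of "\<lambda>i. ?T (ee i)"] hi lo by simp
qed

lemma lap_inv:
  assumes N: "2 * length p \<le> N" and c: "hom_poly_coeffs N k c"
    and inv: "\<And>x. pf N k c (lens_gen q p x) = pf N k c x"
  shows "pf N (k-2) (laplacian_coeffs N c) (lens_gen q p x) = pf N (k-2) (laplacian_coeffs N c) x"
proof -
  have e: "pf N k c (\<lambda>j. x j + r * ee i j) = pf N k c (\<lambda>j. lens_gen q p x j + r * lens_gen q p (ee i) j)" for r i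
  proof -
    have "pf N k c (\<lambda>j. x j + r * ee i j) = pf N k c (lens_gen q p (\<lambda>j. 1 * x j + r * ee i j))"
      using inv by simp
    also have "\<dots> = pf N k c (\<lambda>j. lens_gen q p x j + r * lens_gen q p (ee i) j)"
      using gen_lin[of q p 1 x r "ee i"] by simp
    finally show ?thesis .
  qed
  have "pf N (k-2) (laplacian_coeffs N c) x = 2 * (\<Sum>i<N. tay2 (\<lambda>r. pf N k c (\<lambda>j. lens_gen q p x j + r * lens_gen q p (ee i) j)))"
    by (simp add: lap_tay[OF c] e)
  also have "\<dots> = 2 * (\<Sum>i<N. tay2 (\<lambda>r. pf N k c (\<lambda>j. lens_gen q p x j + r * ee i j)))"
    by (simp add: sum_rot[OF N])
  also have "\<dots> = pf N (k-2) (laplacian_coeffs N c) (lens_gen q p x)"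
    by (simp add: lap_tay[OF c])
  finally show ?thesis by simp
qed

definition fa :: "nat \<Rightarrow> (nat \<Rightarrow> nat) \<Rightarrow> real" where "fa N a = (\<Prod>i<N. fact (a i))"
definition fis :: "nat \<Rightarrow> nat \<Rightarrow> ((nat\<Rightarrow>nat)\<Rightarrow>real) \<Rightarrow> ((nat\<Rightarrow>nat)\<Rightarrow>real) \<Rightarrow> real" where
  "fis N d c v = (\<Sum>a\<in>MI N d. fa N a * c a * v a)"
definition rsq :: "nat \<Rightarrow> ((nat\<Rightarrow>nat)\<Rightarrow>real) \<Rightarrow> ((nat\<Rightarrow>nat)\<Rightarrow>real)" where
  "rsq N v = (\<lambda>a. \<Sum>i<N. if 2 \<le> a i then v (a(i := a i - 2)) else 0)"

lemma MI_add2: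
  assumes "b \<in> MI N d" "i < N"
  shows "b(i := b i + 2) \<in> MI N (d+2)"
proof -
  have "(\<Sum>j<N. (b(i := b i + 2)) j) = (b i + 2) + (\<Sum>j\<in>{..<N}-{i}. b j)"
    using assms by (simp add: sum.remove)
  moreover have "(\<Sum>j<N. b j) = b i + (\<Sum>j\<in>{..<N}-{i}. b j)" using assms by (simp add: sum.remove)
  ultimately show ?thesis using assms by (auto simp: MI_def)
qed

lemma MI_sub2:
  assumes "b(i := b i + 2) \<in> MI N (d+2)" "i < N"
  shows "b \<in> MI N d"
proof -
  have "(\<Sum>j<N. (b(i := b i + 2)) j) = (b i + 2) + (\<Sum>j\<in>{..<N}-{i}. b j)"
    using assms by (simp add: sum.remove)
  moreover have "(\<Sum>j<N. b j) = b i + (\<Sum>j\<in>{..<N}-{i}. b j)" using assms by (simp add: sum.remove)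
  moreover have "\<forall>j\<ge>N. b j = 0" using assms by (auto simp: MI_def split: if_splits)
  ultimately show ?thesis using assms by (auto simp: MI_def)
qed

lemma rsq_hom:
  assumes "hom_poly_coeffs N d v"
  shows "hom_poly_coeffs N (d+2) (rsq N v)"
  unfolding hom_iff
proof (intro allI impI)
  fix a assume "rsq N v a \<noteq> 0"
  then obtain i where i: "i < N" "2 \<le> a i" "v (a(i := a i - 2)) \<noteq> 0"
    by (auto simp: rsq_def elim!: sum.not_neutral_contains_not_neutral split: if_splits)
  then have "a(i := a i - 2) \<in> MI N d" using assms by (auto simp: hom_iff)
  from MI_add2[OF this i(1)] show "a \<in> MI N (d+2)" using i by (simp add: fun_upd_idem)
qed

lemma lap_hom:
  assumes "hom_poly_coeffs N (d+2) c"
  shows "hom_poly_coeffs N d (laplacian_coeffs N c)"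
  unfolding hom_iff
proof (intro allI impI)
  fix b assume "laplacian_coeffs N c b \<noteq> 0"
  then obtain i where i: "i < N" "c (b(i := b i + 2)) \<noteq> 0"
    by (auto simp: laplacian_coeffs_def elim!: sum.not_neutral_contains_not_neutral)
  then have "b(i := b i + 2) \<in> MI N (d+2)" using assms by (auto simp: hom_iff)
  from MI_sub2[OF this i(1)] show "b \<in> MI N d" .
qed

lemma mon_add2:
  assumes "i < N"
  shows "mon N (b(i := b i + 2)) x = (x i)^2 * mon N b x"
proof -
  have P: "(\<Prod>j\<in>{..<N}-{i}. x j ^ (b(i := b i + 2)) j) = (\<Prod>j\<in>{..<N}-{i}. x j ^ b j)"
    by (intro prod.cong) auto
  have "mon N (b(i := b i + 2)) x = x i ^ (b i + 2) * (\<Prod>j\<in>{..<N}-{i}. x j ^ (b(i := b i + 2)) j)"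
    using assms unfolding mon_def by (subst prod.remove[of _ i]) auto
  also have "\<dots> = (x i)^2 * (x i ^ b i * (\<Prod>j\<in>{..<N}-{i}. x j ^ b j))"
    unfolding P by (simp add: power_add power2_eq_square algebra_simps)
  also have "x i ^ b i * (\<Prod>j\<in>{..<N}-{i}. x j ^ b j) = mon N b x"
    using assms unfolding mon_def by (subst (2) prod.remove[of _ i]) auto
  finally show ?thesis .
qed

lemma upd_sub_add: "2 \<le> (a::nat\<Rightarrow>nat) i \<Longrightarrow> (a(i := a i - 2))(i := (a(i := a i - 2)) i + 2) = a"
  by (auto simp: fun_eq_iff)
lemma upd_add_sub: "((b::nat\<Rightarrow>nat)(i := b i + 2))(i := (b(i := b i + 2)) i - 2) = b"
  by auto

lemma pf_rsq:
  assumes "hom_poly_coeffs N d v"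
  shows "pf N (d+2) (rsq N v) x = (\<Sum>i<N. (x i)^2) * pf N d v x"
proof -
  have "pf N (d+2) (rsq N v) x = (\<Sum>i<N. \<Sum>a\<in>MI N (d+2). if 2 \<le> a i then v (a(i := a i - 2)) * mon N a x else 0)"
    unfolding pf_def rsq_def sum_distrib_right by (subst sum.swap) (intro sum.cong refl, auto)
  also have "\<dots> = (\<Sum>i<N. \<Sum>b\<in>MI N d. v b * ((x i)^2 * mon N b x))"
  proof (rule sum.cong[OF refl])
    fix i assume i: "i \<in> {..<N}"
    have "(\<Sum>a\<in>MI N (d+2). if 2 \<le> a i then v (a(i := a i - 2)) * mon N a x else 0)
       = (\<Sum>b\<in>MI N d. v ((b(i := b i + 2))(i := (b(i := b i + 2)) i - 2)) * mon N (b(i := b i + 2)) x)"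
      using i REIX[where i=i and N=N and d=d and F="\<lambda>a. v (a(i := a i - 2)) * mon N a x"] by simp
    also have "\<dots> = (\<Sum>b\<in>MI N d. v b * ((x i)^2 * mon N b x))"
      using i by (simp only: upd_add_sub mon_add2 lessThan_iff)
    finally show "(\<Sum>a\<in>MI N (d+2). if 2 \<le> a i then v (a(i := a i - 2)) * mon N a x else 0)
       = (\<Sum>b\<in>MI N d. v b * ((x i)^2 * mon N b x))" .
  qed
  also have "\<dots> = (\<Sum>i<N. (x i)^2) * pf N d v x"
    by (simp add: pf_def sum_distrib_left sum_distrib_right algebra_simps sum.swap[of _ "{..<N}"])
  finally show ?thesis .
qed

lemma fa_add2:
  assumes "i < N"
  shows "fa N (b(i := b i + 2)) = fa N b * real ((b i + 2) * (b i + 1))"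
proof -
  have P: "(\<Prod>j\<in>{..<N}-{i}. fact ((b(i := b i + 2)) j)) = (\<Prod>j\<in>{..<N}-{i}. (fact (b j)::real))"
    by (intro prod.cong) auto
  have f: "(fact (b i + 2)::real) = fact (b i) * real ((b i + 2) * (b i + 1))"
    by (simp add: fact_Suc algebra_simps numeral_2_eq_2)
  have "fa N (b(i := b i + 2)) = fact (b i + 2) * (\<Prod>j\<in>{..<N}-{i}. fact ((b(i := b i + 2)) j))"
    using assms unfolding fa_def by (subst prod.remove[of _ i]) auto
  also have "\<dots> = (fact (b i) * (\<Prod>j\<in>{..<N}-{i}. fact (b j))) * real ((b i + 2) * (b i + 1))"
    unfolding P f by (simp only: ac_simps)
  also have "fact (b i) * (\<Prod>j\<in>{..<N}-{i}. fact (b j)) = fa N b"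
    using assms unfolding fa_def by (subst (2) prod.remove[of _ i]) auto
  finally show ?thesis .
qed

lemma fis_adj:
  "fis N d (laplacian_coeffs N c) v = fis N (d+2) c (rsq N v)"
proof -
  have "fis N d (laplacian_coeffs N c) v
      = (\<Sum>i<N. \<Sum>b\<in>MI N d. fa N b * real ((b i + 2) * (b i + 1)) * c (b(i := b i + 2)) * v b)"
    unfolding fis_def laplacian_coeffs_def sum_distrib_left sum_distrib_right
    by (subst sum.swap) (intro sum.cong refl, simp add: algebra_simps)
  also have "\<dots> = (\<Sum>i<N. \<Sum>a\<in>MI N (d+2). if 2 \<le> a i then fa N a * c a * v (a(i := a i - 2)) else 0)"
  proof (rule sum.cong[OF refl])
    fix i assume i: "i \<in> {..<N}"
    have "(\<Sum>a\<in>MI N (d+2). if 2 \<le> a i then fa N a * c a * v (a(i := a i - 2)) else 0)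
      = (\<Sum>b\<in>MI N d. fa N (b(i := b i + 2)) * c (b(i := b i + 2)) * v ((b(i := b i + 2))(i := (b(i := b i + 2)) i - 2)))"
      using i REIX[where i=i and N=N and d=d and F="\<lambda>a. fa N a * c a * v (a(i := a i - 2))"] by simp
    also have "\<dots> = (\<Sum>b\<in>MI N d. fa N b * real ((b i + 2) * (b i + 1)) * c (b(i := b i + 2)) * v b)"
      using i by (simp only: upd_add_sub fa_add2 lessThan_iff)
    finally show "(\<Sum>b\<in>MI N d. fa N b * real ((b i + 2) * (b i + 1)) * c (b(i := b i + 2)) * v b) =
      (\<Sum>a\<in>MI N (d+2). if 2 \<le> a i then fa N a * c a * v (a(i := a i - 2)) else 0)" by simp
  qed
  also have "\<dots> = fis N (d+2) c (rsq N v)"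
    unfolding fis_def rsq_def sum_distrib_left
    by (subst sum.swap) (intro sum.cong refl, auto)
  finally show ?thesis .
qed

lemma fa_pos: "fa N a > 0"
  by (simp add: fa_def prod_pos)

lemma fis_pos:
  assumes "hom_poly_coeffs N d w" "fis N d w w = 0"
  shows "w = (\<lambda>_. 0)"
proof
  fix a
  have nn: "\<And>a. a\<in>MI N d \<Longrightarrow> 0 \<le> fa N a * w a * w a"
    using fa_pos by (metis less_imp_le mult.assoc mult_nonneg_nonneg zero_le_square)
  have "\<forall>a\<in>MI N d. fa N a * w a * w a = 0"
    using assms(2) sum_nonneg_eq_0_iff[OF finite_MI nn] by (simp add: fis_def)
  then show "w a = 0"
    using fa_pos[of N a] hom_zero[OF assms(1)] by (cases "a \<in> MI N d") auto
qed

lemma rsq_inj: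
  assumes N: "0 < N" and v: "hom_poly_coeffs N d v" and z: "rsq N v = (\<lambda>_. 0)"
  shows "v = (\<lambda>_. 0)"
proof (rule pf_eq0[OF v])
  fix x
  show "pf N d v x = 0"
  proof (rule sphere_vanish[OF N])
    fix y assume y: "y \<in> sphere_pts N"
    have "pf N (d+2) (rsq N v) y = (\<Sum>i<N. (y i)^2) * pf N d v y" by (rule pf_rsq[OF v])
    then show "pf N d v y = 0" using y z by (simp add: sphere_pts_def pf_def)
  qed
qed

lemma rsq_inv:
  assumes N: "2 * length p \<le> N" and v: "hom_poly_coeffs N d v"
    and inv: "\<And>x. pf N d v (lens_gen q p x) = pf N d v x"
  shows "pf N (d+2) (rsq N v) (lens_gen q p x) = pf N (d+2) (rsq N v) x"
  unfolding pf_rsq[OF v] gen_norm[OF N] using inv[of x] by simp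

interpretation cf: vector_space "\<lambda>(c::real) (f::(nat\<Rightarrow>nat)\<Rightarrow>real) x. c * f x"
  by (rule vs_fun)
interpretation cfp: vector_space_pair "\<lambda>(c::real) (f::(nat\<Rightarrow>nat)\<Rightarrow>real) x. c * f x"
  "\<lambda>(c::real) (f::(nat\<Rightarrow>nat)\<Rightarrow>real) x. c * f x"
  by (rule vsp_fun)

definition invc :: "nat \<Rightarrow> int list \<Rightarrow> nat \<Rightarrow> nat \<Rightarrow> ((nat\<Rightarrow>nat)\<Rightarrow>real) \<Rightarrow> bool" where
  "invc q p N d v \<longleftrightarrow> (\<forall>x. pf N d v (lens_gen q p x) = pf N d v x)"

definition dl :: "(nat \<Rightarrow> nat) \<Rightarrow> (nat \<Rightarrow> nat) \<Rightarrow> real" where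
  "dl a = (\<lambda>b. if b = a then 1 else 0)"

lemma sum_fun_apply: "finite A \<Longrightarrow> sum f A x = (\<Sum>a\<in>A. f a x)"
  by (induction A rule: finite_induct) auto

lemma hom_span:
  assumes "hom_poly_coeffs N d v"
  shows "v \<in> cf.span (dl ` MI N d)"
proof -
  have "v = (\<Sum>a\<in>MI N d. (\<lambda>x. v a * dl a x))"
  proof
    fix b
    have "(\<Sum>a\<in>MI N d. (\<lambda>x. v a * dl a x)) b = (\<Sum>a\<in>MI N d. v a * dl a b)"
      by (simp add: sum_fun_apply finite_MI)
    also have "\<dots> = (if b \<in> MI N d then v b else 0)"
      by (simp add: dl_def if_distrib finite_MI cong: if_cong)
    also have "\<dots> = v b" using hom_zero[OF assms] by auto
    finally show "v b = (\<Sum>a\<in>MI N d. (\<lambda>x. v a * dl a x)) b" by simp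
  qed
  also have "\<dots> \<in> cf.span (dl ` MI N d)"
    by (intro cf.span_sum cf.span_scale cf.span_base) auto
  finally show ?thesis .
qed

lemma hom_add: "hom_poly_coeffs N d x \<Longrightarrow> hom_poly_coeffs N d y \<Longrightarrow> hom_poly_coeffs N d (\<lambda>a. x a + y a)"
  unfolding hom_iff by (metis add.right_neutral)
lemma hom_scale: "hom_poly_coeffs N d x \<Longrightarrow> hom_poly_coeffs N d (\<lambda>a. c * x a)"
  unfolding hom_iff by auto

lemma rsq_add: "rsq N (x + y) = rsq N x + rsq N y"
  unfolding rsq_def plus_fun_def by (auto simp: fun_eq_iff sum.distrib[symmetric] intro!: sum.cong)
lemma rsq_scale: "rsq N (\<lambda>a. c * x a) = (\<lambda>a. c * rsq N x a)"
  unfolding rsq_def by (auto simp: fun_eq_iff sum_distrib_left intro!: sum.cong)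
lemma lap_add: "laplacian_coeffs N (x + y) = laplacian_coeffs N x + laplacian_coeffs N y"
  unfolding laplacian_coeffs_def plus_fun_def by (auto simp: fun_eq_iff sum.distrib[symmetric] algebra_simps intro!: sum.cong)
lemma lap_scale: "laplacian_coeffs N (\<lambda>a. c * x a) = (\<lambda>a. c * laplacian_coeffs N x a)"
  unfolding laplacian_coeffs_def by (auto simp: fun_eq_iff sum_distrib_left algebra_simps intro!: sum.cong)

lemma subspace_hom_inv: "cf.subspace {v. hom_poly_coeffs N d v \<and> invc q p N d v}"
  unfolding cf.subspace_def
proof (intro conjI ballI allI)
  show "0 \<in> {v. hom_poly_coeffs N d v \<and> invc q p N d v}"
    by (simp add: hom_iff invc_def zero_fun_def)
next
  fix x y assume "x \<in> {v. hom_poly_coeffs N d v \<and> invc q p N d v}" "y \<in> {v. hom_poly_coeffs N d v \<and> invc q p N d v}"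
  then show "x + y \<in> {v. hom_poly_coeffs N d v \<and> invc q p N d v}"
    by (auto simp: invc_def plus_fun_def pf_add intro: hom_add)
next
  fix c x assume "x \<in> {v. hom_poly_coeffs N d v \<and> invc q p N d v}"
  then show "(\<lambda>xa. c * x xa) \<in> {v. hom_poly_coeffs N d v \<and> invc q p N d v}"
    by (auto simp: invc_def pf_smult intro: hom_scale)
qed

lemma linear_T: "Vector_Spaces.linear (\<lambda>(c::real) (f::(nat\<Rightarrow>nat)\<Rightarrow>real) x. c * f x) (\<lambda>(c::real) (f::(nat\<Rightarrow>nat)\<Rightarrow>real) x. c * f x)
   (\<lambda>v. laplacian_coeffs N (rsq N v))"
  unfolding Vector_Spaces.linear_iff
  by (simp add: vs_fun rsq_add rsq_scale lap_add lap_scale)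

lemma key:
  assumes N0: "0 < N" and N: "2 * length p \<le> N"
    and v: "hom_poly_coeffs N d v" and vi: "invc q p N d v"
  shows "\<exists>c. hom_poly_coeffs N (d+2) c \<and> invc q p N (d+2) c \<and> laplacian_coeffs N c = v"
proof -
  let ?I = "{v. hom_poly_coeffs N d v \<and> invc q p N d v}"
  let ?T = "\<lambda>v. laplacian_coeffs N (rsq N v)"
  have sub: "cf.subspace ?I" by (rule subspace_hom_inv)
  have lin: "Vector_Spaces.linear (\<lambda>(c::real) (f::(nat\<Rightarrow>nat)\<Rightarrow>real) x. c * f x) (\<lambda>(c::real) (f::(nat\<Rightarrow>nat)\<Rightarrow>real) x. c * f x) ?T"
    by (rule linear_T)
  have TI: "?T ` ?I \<subseteq> ?I"
  proof
    fix u assume "u \<in> ?T ` ?I"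
    then obtain w where w: "hom_poly_coeffs N d w" "invc q p N d w" and u: "u = ?T w" by auto
    have h2: "hom_poly_coeffs N (d+2) (rsq N w)" by (rule rsq_hom[OF w(1)])
    have i2: "\<And>x. pf N (d+2) (rsq N w) (lens_gen q p x) = pf N (d+2) (rsq N w) x"
      using rsq_inv[OF N w(1)] w(2) by (simp add: invc_def)
    have "hom_poly_coeffs N d u" using lap_hom[OF h2] u by simp
    moreover have "invc q p N d u"
      using lap_inv[OF N h2 i2] u by (simp add: invc_def)
    ultimately show "u \<in> ?I" by simp
  qed
  have inj: "inj_on ?T ?I"
  proof (subst cfp.linear_inj_on_iff_eq_0[OF lin sub], intro ballI impI)
    fix w assume w: "w \<in> ?I" and z: "?T w = 0"
    have h2: "hom_poly_coeffs N (d+2) (rsq N w)" using rsq_hom w by auto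
    have "fis N (d+2) (rsq N w) (rsq N w) = fis N d (?T w) w" by (simp add: fis_adj)
    also have "\<dots> = 0" using z by (simp add: fis_def zero_fun_def)
    finally have "rsq N w = (\<lambda>_. 0)" by (rule fis_pos[OF h2])
    then have "w = (\<lambda>_. 0)" using rsq_inj[OF N0] w by auto
    then show "w = 0" by (simp add: zero_fun_def)
  qed
  have spanI: "cf.span ?I = ?I" using sub by (simp add: cf.span_eq_iff)
  have dimeq: "cf.dim (?T ` ?I) = cf.dim ?I"
    using cfp.dim_image_eq'[OF lin, of ?I] inj spanI by simp
  have subT: "cf.subspace (?T ` ?I)" by (rule cfp.linear_subspace_image[OF lin sub])
  have fin: "?I \<subseteq> cf.span (dl ` MI N d)" using hom_span by auto
  have eq: "?T ` ?I = ?I"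
    by (rule cf.subspace_eq_dim[OF subT sub TI fin]) (simp_all add: finite_MI dimeq)
  have "v \<in> ?T ` ?I" using v vi eq by auto
  then obtain w where w: "w \<in> ?I" "v = ?T w" by auto
  show ?thesis
  proof (intro exI conjI)
    show "hom_poly_coeffs N (d+2) (rsq N w)" using rsq_hom w by auto
    show "invc q p N (d+2) (rsq N w)" using rsq_inv[OF N] w by (auto simp: invc_def)
    show "laplacian_coeffs N (rsq N w) = v" using w by simp
  qed
qed

lemma slice_inv:
  assumes N: "2 * length p \<le> N" and c: "invc q p (Suc N) k c" and m: "m \<le> k"
  shows "invc q p N (k - m) (slice N m c)"
  unfolding invc_def
proof
  fix x
  let ?S = "\<lambda>m y. pf N (k - m) (slice N m c) y"
  have "\<And>t. (\<Sum>m\<le>k. t ^ m * (?S m (lens_gen q p x) - ?S m x)) = 0"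
  proof -
    fix t
    have "pf (Suc N) k c (lens_gen q p (x(N:=t))) = pf (Suc N) k c (x(N:=t))"
      using c by (simp add: invc_def)
    moreover have "\<And>m y. ?S m (y(N:=t)) = ?S m y" by (rule pf_cong) auto
    ultimately have "(\<Sum>m\<le>k. t ^ m * ?S m (lens_gen q p x)) = (\<Sum>m\<le>k. t ^ m * ?S m x)"
      by (simp add: pf_slice gen_upd[OF N])
    then show "(\<Sum>m\<le>k. t ^ m * (?S m (lens_gen q p x) - ?S m x)) = 0"
      by (simp add: algebra_simps sum_subtractf)
  qed
  from poly_coeffs_zero[OF this m] show "?S m (lens_gen q p x) = ?S m x" by simp
qed

lemma inv_of_slices:
  assumes N: "2 * length p \<le> N" and sl: "\<And>m. m \<le> k \<Longrightarrow> invc q p N (k - m) (slice N m c)"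
  shows "invc q p (Suc N) k c"
  unfolding invc_def
proof
  fix x
  have "lens_gen q p x N = x N" using N by (simp add: gen_high)
  then show "pf (Suc N) k c (lens_gen q p x) = pf (Suc N) k c x"
    using sl by (simp add: pf_slice invc_def)
qed

definition Dt :: "nat \<Rightarrow> ((nat\<Rightarrow>nat)\<Rightarrow>real) \<Rightarrow> ((nat\<Rightarrow>nat)\<Rightarrow>real)" where
  "Dt N c = (\<lambda>b. real (b N + 1) * c (b(N := b N + 1)))"

definition CS :: "nat \<Rightarrow> int list \<Rightarrow> nat \<Rightarrow> nat \<Rightarrow> ((nat\<Rightarrow>nat)\<Rightarrow>real) set" where
  "CS q p N k = {c. hom_poly_coeffs N k c \<and> harmonic_coeffs N c \<and> invc q p N k c}"

lemma sum_Suc_upd: "(\<Sum>i<Suc N. (b(N := x)) i) = (\<Sum>i<N. b i) + (x::nat)"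
  by (simp add: sum_upd_N)

lemma MI_Suc_upd: "b(N := x) \<in> MI (Suc N) k \<longleftrightarrow> (\<forall>i>N. b i = 0) \<and> (\<Sum>i<N. b i) + x = k"
proof -
  have "(\<forall>i\<ge>Suc N. (b(N := x)) i = 0) \<longleftrightarrow> (\<forall>i>N. b i = 0)" by auto
  then show ?thesis by (simp add: MI_def sum_Suc_upd)
qed

lemma MI_Suc_self: "b \<in> MI (Suc N) k \<longleftrightarrow> (\<forall>i>N. b i = 0) \<and> (\<Sum>i<N. b i) + b N = k"
  using MI_Suc_upd[of b N "b N" k] by simp

lemma MI_N_iff: "b \<in> MI N k \<longleftrightarrow> b \<in> MI (Suc N) k \<and> b N = 0"
proof
  assume "b \<in> MI N k" then show "b \<in> MI (Suc N) k \<and> b N = 0" by (auto simp: MI_Suc_self MI_def)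
next
  assume b: "b \<in> MI (Suc N) k \<and> b N = 0"
  then have "\<forall>i\<ge>N. b i = 0" by (auto simp: MI_Suc_self) (metis le_neq_implies_less)
  then show "b \<in> MI N k" using b by (auto simp: MI_Suc_self MI_def)
qed

lemma Dt_hom:
  assumes "hom_poly_coeffs (Suc N) k c"
  shows "hom_poly_coeffs (Suc N) (k - 1) (Dt N c)"
  unfolding hom_iff
proof (intro allI impI)
  fix b assume "Dt N c b \<noteq> 0"
  then have "c (b(N := b N + 1)) \<noteq> 0" by (auto simp: Dt_def)
  then have "b(N := b N + 1) \<in> MI (Suc N) k" using assms by (auto simp: hom_iff)
  then show "b \<in> MI (Suc N) (k - 1)" by (auto simp: MI_Suc_upd MI_Suc_self)
qed

lemma lap_Dt:
  "laplacian_coeffs (Suc N) (Dt N c) b = real (b N + 1) * laplacian_coeffs (Suc N) c (b(N := b N + 1))"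
  unfolding laplacian_coeffs_def sum_distrib_left
proof (rule sum.cong[OF refl])
  fix i assume "i \<in> {..<Suc N}"
  show "real ((b i + 2) * (b i + 1)) * Dt N c (b(i := b i + 2)) =
    real (b N + 1) * (real (((b(N := b N + 1)) i + 2) * ((b(N := b N + 1)) i + 1)) *
      c ((b(N := b N + 1))(i := (b(N := b N + 1)) i + 2)))"
  proof (cases "i = N")
    case True
    then show ?thesis by (simp add: Dt_def algebra_simps)
  next
    case False
    then have "(b(i := b i + 2))(N := b N + 1) = (b(N := b N + 1))(i := b i + 2)"
      by (simp add: fun_upd_twist)
    then show ?thesis using False by (simp add: Dt_def algebra_simps)
  qed
qed

lemma Dt_harm: "harmonic_coeffs (Suc N) c \<Longrightarrow> harmonic_coeffs (Suc N) (Dt N c)"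
  by (simp add: harmonic_coeffs_def lap_Dt)

lemma slice_Dt: "slice N m (Dt N c) = (\<lambda>a. real (m + 1) * slice N (m + 1) c a)"
  by (auto simp: slice_def Dt_def fun_eq_iff)

lemma Dt_inv:
  assumes N: "2 * length p \<le> N" and c: "invc q p (Suc N) k c" and k: "1 \<le> k"
  shows "invc q p (Suc N) (k - 1) (Dt N c)"
proof (rule inv_of_slices[OF N])
  fix m assume m: "m \<le> k - 1"
  have "invc q p N (k - (m+1)) (slice N (m+1) c)" using slice_inv[OF N c] m k by simp
  moreover have "k - 1 - m = k - (m + 1)" by simp
  ultimately show "invc q p N (k - 1 - m) (slice N m (Dt N c))"
    by (simp add: slice_Dt invc_def pf_smult)
qed

lemma pf_Suc_eq:
  assumes "hom_poly_coeffs N k c"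
  shows "pf (Suc N) k c x = pf N k c x"
proof -
  have "pf (Suc N) k c x = (\<Sum>a\<in>MI N k. c a * mon (Suc N) a x)"
    unfolding pf_def
    by (rule sum.mono_neutral_right) (use assms in \<open>auto simp: finite_MI MI_N_iff[of _ N k] hom_iff\<close>)
  also have "\<dots> = pf N k c x"
    unfolding pf_def by (intro sum.cong refl) (simp add: mon_Suc MI_def)
  finally show ?thesis .
qed

lemma kernel_Dt:
  assumes N: "2 * length p \<le> N"
  shows "{c \<in> CS q p (Suc N) k. Dt N c = 0} = CS q p N k"
proof (intro set_eqI iffI)
  fix c assume "c \<in> {c \<in> CS q p (Suc N) k. Dt N c = 0}"
  then have c: "hom_poly_coeffs (Suc N) k c" "harmonic_coeffs (Suc N) c" "invc q p (Suc N) k c"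
    and z: "Dt N c = 0" by (auto simp: CS_def)
  have cz: "c a = 0" if "a N \<noteq> 0" for a
  proof -
    have "Dt N c (a(N := a N - 1)) = 0" using z by (simp add: zero_fun_def)
    moreover have "(a(N := a N - 1))(N := a N - 1 + 1) = a" using that by auto
    ultimately show ?thesis using that by (simp add: Dt_def)
  qed
  have h: "hom_poly_coeffs N k c"
    using c(1) cz by (auto simp: hom_iff MI_N_iff[of _ N k])
  have "harmonic_coeffs N c"
    unfolding harmonic_coeffs_def
  proof
    fix b
    have "laplacian_coeffs (Suc N) c b = laplacian_coeffs N c b + real ((b N + 2) * (b N + 1)) * c (b(N := b N + 2))"
      by (simp add: laplacian_coeffs_def)
    then show "laplacian_coeffs N c b = 0" using c(2) cz[of "b(N := b N + 2)"]
      by (simp add: harmonic_coeffs_def)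
  qed
  moreover have "invc q p N k c" using c(3) pf_Suc_eq[OF h] by (simp add: invc_def)
  ultimately show "c \<in> CS q p N k" using h by (simp add: CS_def)
next
  fix c assume "c \<in> CS q p N k"
  then have c: "hom_poly_coeffs N k c" "harmonic_coeffs N c" "invc q p N k c" by (auto simp: CS_def)
  have cz: "c a = 0" if "a N \<noteq> 0" for a using hom_zero[OF c(1)] that by (auto simp: MI_def)
  have "hom_poly_coeffs (Suc N) k c" using c(1) by (auto simp: hom_iff MI_N_iff[of _ N k])
  moreover have "harmonic_coeffs (Suc N) c"
    unfolding harmonic_coeffs_def
  proof
    fix b
    have "laplacian_coeffs (Suc N) c b = laplacian_coeffs N c b + real ((b N + 2) * (b N + 1)) * c (b(N := b N + 2))"
      by (simp add: laplacian_coeffs_def)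
    then show "laplacian_coeffs (Suc N) c b = 0" using c(2) cz[of "b(N := b N + 2)"]
      by (simp add: harmonic_coeffs_def)
  qed
  moreover have "invc q p (Suc N) k c" using c(3) pf_Suc_eq[OF c(1)] by (simp add: invc_def)
  moreover have "Dt N c = 0" using cz by (auto simp: Dt_def fun_eq_iff)
  ultimately show "c \<in> {c \<in> CS q p (Suc N) k. Dt N c = 0}" by (simp add: CS_def)
qed

lemma lap_Suc:
  "laplacian_coeffs (Suc N) c b = laplacian_coeffs N c b + real ((b N + 2) * (b N + 1)) * c (b(N := b N + 2))"
  by (simp add: laplacian_coeffs_def)

lemma pf_div: "pf N k (\<lambda>a. c a / t) x = pf N k c x / t"
  by (simp add: pf_def sum_divide_distrib)

lemma image_Dt:
  assumes N0: "0 < N" and N: "2 * length p \<le> N" and k: "1 \<le> k"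
    and u: "u \<in> CS q p (Suc N) (k - 1)"
  shows "\<exists>c\<in>CS q p (Suc N) k. Dt N c = u"
proof -
  define j where "j = k - 1"
  have kj: "k = j + 1" using k by (simp add: j_def)
  from u have uh: "hom_poly_coeffs (Suc N) j u" and uH: "harmonic_coeffs (Suc N) u"
    and ui: "invc q p (Suc N) j u" by (auto simp: CS_def j_def)
  define v where "v = (\<lambda>a. - slice N 1 u a)"
  obtain c0 where c0: "hom_poly_coeffs N k c0" "invc q p N k c0" "laplacian_coeffs N c0 = v"
  proof (cases "j = 0")
    case True
    have "slice N 1 u = (\<lambda>_. 0)" using slice_big[OF uh] True by simp
    then have "v = (\<lambda>_. 0)" by (simp add: v_def)
    moreover have "hom_poly_coeffs N k (\<lambda>_. 0)" by (simp add: hom_iff)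
    moreover have "invc q p N k (\<lambda>_. 0)" by (simp add: invc_def)
    moreover have "laplacian_coeffs N (\<lambda>_. 0) = (\<lambda>_. 0)" by (simp add: laplacian_coeffs_def fun_eq_iff)
    ultimately show ?thesis using that by metis
  next
    case False
    have vh: "hom_poly_coeffs N (j - 1) v" unfolding v_def
      using hom_scale[OF slice_hom[OF uh, of 1], of "-1"] by simp
    have vi: "invc q p N (j - 1) v" unfolding v_def
      using slice_inv[OF N ui, of 1] False by (simp add: invc_def pf_smult[of _ _ "-1", simplified])
    obtain c where "hom_poly_coeffs N (j - 1 + 2) c" "invc q p N (j - 1 + 2) c" "laplacian_coeffs N c = v"
      using key[OF N0 N vh vi] by blast
    moreover have "j - 1 + 2 = k" using False kj by simp
    ultimately show ?thesis using that by metis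
  qed
  have c0z: "c0 a = 0" if "a N \<noteq> 0" for a using hom_zero[OF c0(1)] that by (auto simp: MI_def)
  define c where "c a = (if a N = 0 then c0 a else u (a(N := a N - 1)) / real (a N))" for a
  have ch: "hom_poly_coeffs (Suc N) k c"
    unfolding hom_iff
  proof (intro allI impI)
    fix a assume ca: "c a \<noteq> 0"
    show "a \<in> MI (Suc N) k"
    proof (cases "a N = 0")
      case True
      then have "a \<in> MI N k" using ca c0(1) by (auto simp: c_def hom_iff)
      then show ?thesis using MI_N_iff by blast
    next
      case False
      then have "u (a(N := a N - 1)) \<noteq> 0" using ca by (auto simp: c_def)
      then have "a(N := a N - 1) \<in> MI (Suc N) j" using uh by (auto simp: hom_iff)
      then show ?thesis using False kj by (auto simp: MI_Suc_upd MI_Suc_self)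
    qed
  qed
  have Dc: "Dt N c = u"
  proof
    fix b :: "nat \<Rightarrow> nat"
    have "(b(N := b N + 1))(N := b N + 1 - 1) = b" by auto
    then show "Dt N c b = u b" by (simp add: Dt_def c_def)
  qed
  have cH: "harmonic_coeffs (Suc N) c"
    unfolding harmonic_coeffs_def
  proof
    fix b
    show "laplacian_coeffs (Suc N) c b = 0"
    proof (cases "b N")
      case 0
      have "laplacian_coeffs N c b = laplacian_coeffs N c0 b"
        unfolding laplacian_coeffs_def using 0 by (intro sum.cong refl) (auto simp: c_def)
      also have "\<dots> = - u (b(N := 1))" using c0(3) 0 by (simp add: v_def slice_def)
      finally have l1: "laplacian_coeffs N c b = - u (b(N := 1))" .
      have "(b(N := 2))(N := 2 - 1) = b(N := 1)" by simp
      then have "c (b(N := b N + 2)) = u (b(N := 1)) / 2" using 0 by (simp add: c_def)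
      then show ?thesis using l1 0 by (simp add: lap_Suc)
    next
      case (Suc m)
      have hu: "laplacian_coeffs (Suc N) u (b(N := m)) = 0" using uH by (simp add: harmonic_coeffs_def)
      have e1: "laplacian_coeffs N u (b(N := m)) = (\<Sum>i<N. real ((b i + 2) * (b i + 1)) * u ((b(i := b i + 2))(N := m)))"
        unfolding laplacian_coeffs_def
        by (intro sum.cong refl) (auto simp: fun_upd_twist)
      have e2: "laplacian_coeffs N c b = (\<Sum>i<N. real ((b i + 2) * (b i + 1)) * u ((b(i := b i + 2))(N := m))) / real (Suc m)"
        unfolding laplacian_coeffs_def sum_divide_distrib
        by (intro sum.cong refl) (use Suc in \<open>auto simp: c_def\<close>)
      have e3: "c (b(N := b N + 2)) = u (b(N := m + 2)) / real (m + 3)"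
        using Suc by (simp add: c_def)
      have A: "laplacian_coeffs N u (b(N := m)) + real ((m + 2) * (m + 1)) * u (b(N := m + 2)) = 0"
        using hu by (simp add: lap_Suc)
      have "(\<Sum>i<N. real ((b i + 2) * (b i + 1)) * u ((b(i := b i + 2))(N := m))) = - (real ((m + 2) * (m + 1)) * u (b(N := m + 2)))"
        using A unfolding e1 by (simp only: eq_neg_iff_add_eq_0)
      then have "laplacian_coeffs N c b = - real (m + 2) * u (b(N := m + 2))"
      proof -
        assume h: "(\<Sum>i<N. real ((b i + 2) * (b i + 1)) * u ((b(i := b i + 2))(N := m))) = - (real ((m + 2) * (m + 1)) * u (b(N := m + 2)))"
        obtain S where S: "S = (\<Sum>i<N. real ((b i + 2) * (b i + 1)) * u ((b(i := b i + 2))(N := m)))" by blast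
        obtain U where U: "U = u (b(N := m + 2))" by blast
        have h': "S = - (real ((m + 2) * (m + 1)) * U)" using h S U by simp
        have e2': "laplacian_coeffs N c b = S / real (Suc m)" using e2 S by simp
        show ?thesis unfolding e2' h' U[symmetric] by (simp add: field_simps)
      qed
      then show ?thesis
      proof -
        assume h: "laplacian_coeffs N c b = - real (m + 2) * u (b(N := m + 2))"
        have L: "laplacian_coeffs (Suc N) c b = laplacian_coeffs N c b + real ((m+3)*(m+2)) * c (b(N := b N + 2))"
          using Suc by (simp add: lap_Suc algebra_simps)
        obtain C where C: "C = c (b(N := b N + 2))" by blast
        obtain U where U: "U = u (b(N := m + 2))" by blast
        have e3': "C = U / real (m + 3)" using e3 C U by simp
        show ?thesis unfolding L C[symmetric] h U[symmetric] e3' by (simp add: field_simps)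
      qed
    qed
  qed
  have ci: "invc q p (Suc N) k c"
  proof (rule inv_of_slices[OF N])
    fix m assume m: "m \<le> k"
    show "invc q p N (k - m) (slice N m c)"
    proof (cases m)
      case 0
      have "slice N 0 c = c0" using c0z by (auto simp: slice_def c_def fun_eq_iff fun_upd_idem)
      then show ?thesis using c0(2) 0 by simp
    next
      case (Suc m')
      have "slice N m c = (\<lambda>a. (1 / real (Suc m')) * slice N m' u a)"
        using Suc by (auto simp: slice_def c_def fun_eq_iff)
      moreover have "invc q p N (j - m') (slice N m' u)" using slice_inv[OF N ui] m Suc kj by simp
      moreover have "k - m = j - m'" using Suc kj by simp
      ultimately show ?thesis by (simp add: invc_def pf_smult pf_div)
    qed
  qed
  show ?thesis using ch cH ci Dc by (auto simp: CS_def)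
qed

lemma Dt_add: "Dt N (x + y) = Dt N x + Dt N y"
  by (auto simp: Dt_def fun_eq_iff algebra_simps)
lemma Dt_scale: "Dt N (\<lambda>a. c * x a) = (\<lambda>a. c * Dt N x a)"
  by (auto simp: Dt_def fun_eq_iff algebra_simps)

lemma linear_Dt: "Vector_Spaces.linear (\<lambda>(c::real) (f::(nat\<Rightarrow>nat)\<Rightarrow>real) x. c * f x) (\<lambda>(c::real) (f::(nat\<Rightarrow>nat)\<Rightarrow>real) x. c * f x)
   (Dt N)"
  unfolding Vector_Spaces.linear_iff by (simp add: vs_fun Dt_add Dt_scale)

lemma lap_add': "laplacian_coeffs N (\<lambda>a. x a + y a) b = laplacian_coeffs N x b + laplacian_coeffs N y b"
  by (simp add: laplacian_coeffs_def sum.distrib algebra_simps)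

lemma subspace_CS: "cf.subspace (CS q p N k)"
  unfolding cf.subspace_def
proof (intro conjI ballI allI)
  show "0 \<in> CS q p N k"
    by (simp add: CS_def hom_iff invc_def harmonic_coeffs_def laplacian_coeffs_def zero_fun_def)
next
  fix x y assume "x \<in> CS q p N k" "y \<in> CS q p N k"
  then show "x + y \<in> CS q p N k"
    by (auto simp: CS_def invc_def harmonic_coeffs_def lap_add' plus_fun_def pf_add intro: hom_add)
next
  fix c x assume "x \<in> CS q p N k"
  then show "(\<lambda>xa. c * x xa) \<in> CS q p N k"
    by (auto simp: CS_def invc_def harmonic_coeffs_def lap_scale pf_smult intro: hom_scale)
qed

lemma CS_span: "CS q p N k \<subseteq> cf.span (dl ` MI N k)"
  using hom_span by (auto simp: CS_def)

lemma image_Dt_eq: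
  assumes N0: "0 < N" and N: "2 * length p \<le> N" and k: "1 \<le> k"
  shows "Dt N ` CS q p (Suc N) k = CS q p (Suc N) (k - 1)"
proof
  show "Dt N ` CS q p (Suc N) k \<subseteq> CS q p (Suc N) (k - 1)"
    using Dt_hom Dt_harm Dt_inv[OF N _ k] by (auto simp: CS_def)
  show "CS q p (Suc N) (k - 1) \<subseteq> Dt N ` CS q p (Suc N) k"
    using image_Dt[OF N0 N k] by blast
qed

lemma dim_rec:
  assumes N0: "0 < N" and N: "2 * length p \<le> N" and k: "1 \<le> k"
  shows "cf.dim (CS q p (Suc N) k) = cf.dim (CS q p N k) + cf.dim (CS q p (Suc N) (k - 1))"
  using cfp.rank_nullity'[OF linear_Dt[of N] subspace_CS[of q p "Suc N" k] CS_span[of q p "Suc N" k] finite_imageI[OF finite_MI]]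
  by (simp add: kernel_Dt[OF N] image_Dt_eq[OF N0 N k])

lemma dim_rec0:
  assumes N: "2 * length p \<le> N"
  shows "CS q p (Suc N) 0 = CS q p N 0"
proof -
  have "Dt N c = 0" if "c \<in> CS q p (Suc N) 0" for c
  proof -
    have h: "hom_poly_coeffs (Suc N) 0 c" using that by (simp add: CS_def)
    have "c (b(N := b N + 1)) = 0" for b
      by (rule hom_zero[OF h]) (simp add: MI_Suc_upd)
    then show ?thesis by (simp add: Dt_def fun_eq_iff)
  qed
  then have "{c \<in> CS q p (Suc N) 0. Dt N c = 0} = CS q p (Suc N) 0" by auto
  then show ?thesis using kernel_Dt[OF N, of q 0] by simp
qed

lemma dim_sum:
  assumes N0: "0 < N" and N: "2 * length p \<le> N"
  shows "cf.dim (CS q p (Suc N) k) = (\<Sum>j\<le>k. cf.dim (CS q p N j))"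
proof (induction k)
  case 0
  then show ?case using dim_rec0[OF N] by simp
next
  case (Suc k)
  then show ?case using dim_rec[OF N0 N, of "Suc k" q] by simp
qed

lemma dim_le_card:
  "cf.dim (CS q p N k) \<le> card (MI N k)"
proof -
  have "cf.dim (CS q p N k) \<le> card (dl ` MI N k)"
    by (rule cf.dim_le_card[OF CS_span finite_imageI[OF finite_MI]])
  also have "\<dots> \<le> card (MI N k)" by (rule card_image_le[OF finite_MI])
  finally show ?thesis .
qed

interpretation rp: vector_space_pair "\<lambda>(c::real) (f::(nat\<Rightarrow>nat)\<Rightarrow>real) x. c * f x"
  "\<lambda>(c::real) (f::(nat\<Rightarrow>real)\<Rightarrow>real) x. c * f x"
  by (rule vsp_fun)

definition Rs :: "nat \<Rightarrow> nat \<Rightarrow> ((nat\<Rightarrow>nat)\<Rightarrow>real) \<Rightarrow> (nat\<Rightarrow>real) \<Rightarrow> real" where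
  "Rs N k c = (\<lambda>x. if x \<in> sphere_pts N then pf N k c x else 0)"

lemma linear_Rs: "Vector_Spaces.linear (\<lambda>(c::real) (f::(nat\<Rightarrow>nat)\<Rightarrow>real) x. c * f x)
   (\<lambda>(c::real) (f::(nat\<Rightarrow>real)\<Rightarrow>real) x. c * f x) (Rs N k)"
  unfolding Vector_Spaces.linear_iff
  by (auto simp: vs_fun Rs_def fun_eq_iff plus_fun_def pf_add pf_smult)

lemma gen_pow_sphere:
  assumes N: "2 * length p \<le> N" "x \<in> sphere_pts N"
  shows "(lens_gen q p ^^ m) x \<in> sphere_pts N"
  by (induction m) (auto simp: assms gen_sphere[OF N(1)])

lemma gen_pow_inv:
  assumes "invc q p N k c"
  shows "pf N k c ((lens_gen q p ^^ m) x) = pf N k c x"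
  using assms by (induction m) (auto simp: invc_def)

lemma inv_space_eq:
  assumes N0: "0 < N" and N: "N = 2 * length p + W"
  shows "invariant_harm_space W q p k = Rs N k ` CS q p N k"
proof
  have N': "2 * length p \<le> N" using N by simp
  show "invariant_harm_space W q p k \<subseteq> Rs N k ` CS q p N k"
  proof
    fix f assume "f \<in> invariant_harm_space W q p k"
    then obtain c where f: "f = (\<lambda>x. if x \<in> sphere_pts N then poly_fun N c x else 0)"
      and c: "hom_poly_coeffs N k c" "harmonic_coeffs N c"
      and inv: "\<forall>h\<in>lens_group q p. \<forall>x\<in>sphere_pts N. f (h x) = f x"
      by (auto simp: invariant_harm_space_def harm_space_def N[symmetric])
    have pw: "\<And>x. poly_fun N c x = pf N k c x" using poly_fun_pf[OF c(1)] by simp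
    have f': "f = Rs N k c" using f by (simp add: Rs_def pw fun_eq_iff)
    have "lens_gen q p \<in> lens_group q p" unfolding lens_group_def by (rule CollectI, rule exI[of _ 1]) simp
    then have "\<forall>x\<in>sphere_pts N. pf N k c (lens_gen q p x) = pf N k c x"
      using inv gen_sphere[OF N'] by (auto simp: f' Rs_def)
    then have "invc q p N k c" using sphere_inv[OF N0 N'] by (auto simp: invc_def)
    then show "f \<in> Rs N k ` CS q p N k" using c f' by (auto simp: CS_def)
  qed
  show "Rs N k ` CS q p N k \<subseteq> invariant_harm_space W q p k"
  proof
    fix f assume "f \<in> Rs N k ` CS q p N k"
    then obtain c where c: "hom_poly_coeffs N k c" "harmonic_coeffs N c" "invc q p N k c"
      and f: "f = Rs N k c" by (auto simp: CS_def)
    have pw: "\<And>x. poly_fun N c x = pf N k c x" using poly_fun_pf[OF c(1)] by simp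
    have "f = (\<lambda>x. if x \<in> sphere_pts N then poly_fun N c x else 0)"
      using f by (simp add: Rs_def pw fun_eq_iff)
    then have "f \<in> harm_space N k"
      unfolding harm_space_def using c by blast
    moreover have "\<forall>h\<in>lens_group q p. \<forall>x\<in>sphere_pts N. f (h x) = f x"
      using gen_pow_sphere[OF N'] gen_pow_inv[OF c(3)] by (auto simp: lens_group_def f Rs_def)
    ultimately show "f \<in> invariant_harm_space W q p k"
      by (simp add: invariant_harm_space_def N)
  qed
qed

lemma fun_dim_eq:
  assumes N0: "0 < N" and N: "N = 2 * length p + W"
  shows "fun_dim (invariant_harm_space W q p k) = cf.dim (CS q p N k)"
proof -
  have inj: "inj_on (Rs N k) (cf.span (CS q p N k))"
  proof -
    have sp: "cf.span (CS q p N k) = CS q p N k" using subspace_CS by (simp add: cf.span_eq_iff)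
    have "inj_on (Rs N k) (CS q p N k)"
    proof (subst rp.linear_inj_on_iff_eq_0[OF linear_Rs subspace_CS], intro ballI impI)
      fix c assume c: "c \<in> CS q p N k" and z: "Rs N k c = 0"
      have h: "hom_poly_coeffs N k c" using c by (simp add: CS_def)
      have "pf N k c x = 0" for x
      proof (rule sphere_vanish[OF N0])
        fix y assume y: "y \<in> sphere_pts N"
        have "Rs N k c y = 0" using z by (simp add: zero_fun_def)
        then show "pf N k c y = 0" using y by (simp add: Rs_def)
      qed
      then have "c = (\<lambda>_. 0)" using pf_eq0[OF h] by blast
      then show "c = 0" by (simp add: zero_fun_def)
    qed
    then show ?thesis unfolding sp .
  qed
  show ?thesis
    unfolding inv_space_eq[OF N0 N] fun_dim_def
    using rp.dim_image_eq'[OF linear_Rs inj] by simp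
qed

lemma card_MI_Suc: "card (MI (Suc M) k) = (\<Sum>j\<le>k. card (MI M j))"
proof -
  have "bij_betw (\<lambda>(j, b). b(M := k - j)) (Sigma {..k} (\<lambda>j. MI M j)) (MI (Suc M) k)"
  proof (rule bij_betwI[where g="\<lambda>a. (k - a M, a(M := 0))"])
    show "(\<lambda>(j, b). b(M := k - j)) \<in> Sigma {..k} (MI M) \<rightarrow> MI (Suc M) k"
      by (auto simp: MI_Suc_upd MI_def)
    show "(\<lambda>a. (k - a M, a(M := 0))) \<in> MI (Suc M) k \<rightarrow> Sigma {..k} (MI M)"
    proof
      fix a assume a: "a \<in> MI (Suc M) k"
      then have s: "(\<Sum>i<M. a i) + a M = k" "\<forall>i>M. a i = 0" by (auto simp: MI_Suc_self)
      have "\<forall>i\<ge>M. (a(M := 0)) i = 0" using s(2) by (auto simp: le_less)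
      then show "(k - a M, a(M := 0)) \<in> Sigma {..k} (MI M)"
        using s by (auto simp: MI_def sum_upd_N)
    qed
    fix x assume "x \<in> Sigma {..k} (MI M)"
    then obtain j b where x: "x = (j, b)" "j \<le> k" "b \<in> MI M j" by auto
    then have "b M = 0" by (simp add: MI_def)
    then show "(\<lambda>a. (k - a M, a(M := 0))) ((\<lambda>(j, b). b(M := k - j)) x) = x"
      using x by (auto simp: fun_eq_iff)
  next
    fix a assume a: "a \<in> MI (Suc M) k"
    then have s: "(\<Sum>i<M. a i) + a M = k" by (auto simp: MI_Suc_self)
    then show "(\<lambda>(j, b). b(M := k - j)) ((\<lambda>a. (k - a M, a(M := 0))) a) = a"
      by (auto simp: fun_eq_iff)
  qed
  then have "card (MI (Suc M) k) = card (Sigma {..k} (\<lambda>j. MI M j))"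
    by (simp add: bij_betw_same_card)
  also have "\<dots> = (\<Sum>j\<le>k. card (MI M j))" by (simp add: card_SigmaI finite_MI)
  finally show ?thesis .
qed

lemma summable_cum:
  fixes a :: "nat \<Rightarrow> real"
  assumes a: "\<And>k. 0 \<le> a k" and r: "0 \<le> r" "r < 1" and s: "summable (\<lambda>k. a k * r^k)"
  shows "summable (\<lambda>k. (\<Sum>j\<le>k. a j) * r^k)"
proof -
  have s1: "summable (\<lambda>k. norm (a k * r^k))" using s a r by simp
  have s2: "summable (\<lambda>k. norm (r^k))" using r by (simp add: summable_geometric)
  have "summable (\<lambda>k. \<Sum>i\<le>k. a i * r^i * r^(k - i))"
    by (rule summable_Cauchy_product[OF s1 s2])
  moreover have "(\<Sum>i\<le>k. a i * r^i * r^(k - i)) = (\<Sum>j\<le>k. a j) * r^k" for k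
    by (simp add: sum_distrib_right mult.assoc power_add[symmetric])
  ultimately show ?thesis by simp
qed

lemma summable_card_MI:
  fixes r :: real
  assumes r: "0 \<le> r" "r < 1"
  shows "summable (\<lambda>k. real (card (MI M k)) * r^k)"
proof (induction M)
  case 0
  have "(\<lambda>k. real (card (MI 0 k)) * r^k) = (\<lambda>k. if k = 0 then 1 else 0)"
    by (auto simp: MI0 fun_eq_iff)
  then show ?case using sums_single[of 0 "\<lambda>_. 1::real"] by (auto simp: sums_iff)
next
  case (Suc M)
  have "summable (\<lambda>k. (\<Sum>j\<le>k. real (card (MI M j))) * r^k)"
    by (rule summable_cum[OF _ r Suc]) simp
  then show ?case by (simp add: card_MI_Suc)
qed

definition DD :: "nat \<Rightarrow> int list \<Rightarrow> nat \<Rightarrow> nat \<Rightarrow> nat" where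
  "DD q p W k = fun_dim (invariant_harm_space W q p k)"

lemma DD_Suc:
  assumes "p \<noteq> []"
  shows "DD q p (Suc W) k = (\<Sum>j\<le>k. DD q p W j)"
proof -
  let ?N = "2 * length p + W"
  have N0: "0 < ?N" "0 < Suc ?N" using assms by auto
  have "DD q p (Suc W) k = cf.dim (CS q p (Suc ?N) k)"
    unfolding DD_def by (rule fun_dim_eq) (use N0 in auto)
  also have "\<dots> = (\<Sum>j\<le>k. cf.dim (CS q p ?N j))" by (rule dim_sum) (use N0 in auto)
  also have "\<dots> = (\<Sum>j\<le>k. DD q p W j)" unfolding DD_def
    by (intro sum.cong refl fun_dim_eq[symmetric]) (use N0 in auto)
  finally show ?thesis .
qed

lemma DD_0_le:
  assumes "p \<noteq> []"
  shows "DD q p 0 k \<le> card (MI (2 * length p) k)"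
  unfolding DD_def using fun_dim_eq[of "2 * length p" p 0 q k] dim_le_card assms by simp

lemma DD_summable:
  fixes r :: real
  assumes p: "p \<noteq> []" and r: "0 \<le> r" "r < 1"
  shows "summable (\<lambda>k. real (DD q p W k) * r^k)"
proof (induction W)
  case 0
  show ?case
  proof (rule summable_comparison_test[OF _ summable_card_MI[OF r, of "2 * length p"]])
    show "\<exists>N. \<forall>n\<ge>N. norm (real (DD q p 0 n) * r ^ n) \<le> real (card (MI (2 * length p) n)) * r ^ n"
      using DD_0_le[OF p] r by (auto intro!: mult_right_mono)
  qed
next
  case (Suc W)
  have "summable (\<lambda>k. (\<Sum>j\<le>k. real (DD q p W j)) * r^k)"
    by (rule summable_cum[OF _ r Suc]) simp
  then show ?case by (simp add: DD_Suc[OF p])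
qed

lemma gen_fun_DD: "gen_fun W q p z = (\<Sum>k. of_nat (DD q p W k) * z ^ k)"
  by (simp add: gen_fun_def DD_def)

lemma gen_fun_Suc:
  assumes p: "p \<noteq> []" and z: "cmod z < 1"
  shows "gen_fun (Suc W) q p z = gen_fun W q p z / (1 - z)"
proof -
  let ?a = "\<lambda>k. of_nat (DD q p W k) * z ^ k"
  have s1: "summable (\<lambda>k. norm (?a k))"
    using DD_summable[OF p norm_ge_zero z, of q W] by (simp add: norm_mult norm_power)
  have s2: "summable (\<lambda>k. norm (z ^ k))" using z by (simp add: norm_power summable_geometric)
  have "gen_fun W q p z * (\<Sum>k. z ^ k) = (\<Sum>k. \<Sum>i\<le>k. ?a i * z ^ (k - i))"
    unfolding gen_fun_DD by (rule Cauchy_product[OF s1 s2])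
  also have "\<dots> = (\<Sum>k. of_nat (DD q p (Suc W) k) * z ^ k)"
  proof -
    have "(\<Sum>i\<le>k. ?a i * z ^ (k - i)) = of_nat (DD q p (Suc W) k) * z ^ k" for k
      by (simp add: DD_Suc[OF p] sum_distrib_right mult.assoc power_add[symmetric])
    then show ?thesis by simp
  qed
  also have "\<dots> = gen_fun (Suc W) q p z" by (simp add: gen_fun_DD)
  finally have e: "gen_fun W q p z * (\<Sum>k. z ^ k) = gen_fun (Suc W) q p z" .
  have "(\<Sum>k. z ^ k) = 1 / (1 - z)" using z by (rule suminf_geometric)
  then show ?thesis using e by (simp add: field_simps)
qed

lemma gen_fun_W:
  assumes p: "p \<noteq> []" and z: "cmod z < 1"
  shows "gen_fun W q p z = (1 - z) powi (- int W) * gen_fun 0 q p z"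
proof -
  have pw: "\<And>W. (1 - z) powi (- int W) = inverse ((1 - z) ^ W)" by (simp add: power_int_minus)
  have nz: "1 - z \<noteq> 0" using z by auto
  show ?thesis unfolding pw
  proof (induction W)
    case 0
    then show ?case by simp
  next
    case (Suc W)
    have "gen_fun (Suc W) q p z = gen_fun W q p z / (1 - z)" by (rule gen_fun_Suc[OF p z])
    also have "\<dots> = inverse ((1 - z) ^ Suc W) * gen_fun 0 q p z"
      using nz unfolding Suc by (simp add: field_simps)
    finally show ?case .
  qed
qed

theorem corollary3p2p4:
  fixes q :: nat and p s :: "int list"
  assumes "q \<ge> 2"
    and "Gcd (set p \<union> {int q}) = 1"
  shows "(\<forall>W z. cmod z < 1 \<longrightarrow>
            gen_fun W q p z = (1 - z) powi (- int W) * gen_fun 0 q p z)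
     \<and> ((length s = length p \<and> Gcd (set s \<union> {int q}) = 1 \<and>
         (\<forall>z. cmod z < 1 \<longrightarrow> gen_fun 0 q p z = gen_fun 0 q s z))
        \<longrightarrow> (\<forall>W z. cmod z < 1 \<longrightarrow> gen_fun W q p z = gen_fun W q s z))"
proof -
  have p: "p \<noteq> []"
  proof
    assume "p = []"
    then have "Gcd {int q} = 1" using assms(2) by simp
    then show False using assms(1) by simp
  qed
  show ?thesis
  proof (intro conjI allI impI)
    fix W z assume "cmod (z::complex) < 1"
    then show "gen_fun W q p z = (1 - z) powi (- int W) * gen_fun 0 q p z"
      by (rule gen_fun_W[OF p])
  next
    fix W z
    assume h: "length s = length p \<and> Gcd (set s \<union> {int q}) = 1 \<and>
         (\<forall>z. cmod z < 1 \<longrightarrow> gen_fun 0 q p z = gen_fun 0 q s z)"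
      and z: "cmod (z::complex) < 1"
    have s: "s \<noteq> []" using h p by auto
    show "gen_fun W q p z = gen_fun W q s z"
      using gen_fun_W[OF p z, of W q] gen_fun_W[OF s z, of W q] h z by simp
  qed
qed

end
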